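(* There is a constant $C>0$, independent of $n$, $f$, $g$ and $x$, such that for all real-valued $f,g\in C^{1}[0,1]$, all $n\ge1$ and all $x\in[0,1]$, $$n\left|B_{n}(fg)(x)-B_{n}(f)(x)B_{n}(g)(x)-\frac{x(1-x)}{n}f'(x)g'(x)\right|\le C\,x(1-x)\Big\{\omega_{3}\big(f';n^{-1/6}\big)\,\omega_{3}\big(g';n^{-1/6}\big)$$ $$+\|f'\|\,\omega_{3}\big(g';n^{-1/6}\big)+\|g'\|\,\omega_{3}\big(f';n^{-1/6}\big)+\max\Big\{\frac{\|f\|}{n^{1/2}},\omega_{3}\big(f';n^{-1/6}\big)\Big\}\cdot\max\Big\{\frac{\|g\|}{n^{1/2}},\omega_{3}\big(g';n^{-1/6}\big)\Big\}\Big\}.$$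
   Context: For $f:[0,1]\to\mathbb{R}$ the Bernstein polynomials are $B_{n}(f)(x)=\sum_{k=0}^{n}\binom{n}{k}x^{k}(1-x)^{n-k}f(k/n)$. $\|\cdot\|$ denotes the uniform norm on $C[0,1]$. For $h\in C[0,1]$ and $\delta>0$, $\omega_{3}(h;\delta)=\sup\{|h(x+3t)-3h(x+2t)+3h(x+t)-h(x)| : 0<t\le\delta,\ x,x+3t\in[0,1]\}$ is the third-order modulus of smoothness. *)

theory Defs
  imports "HOL-Analysis.Analysis"
begin

definition bernstein :: "nat \<Rightarrow> (real \<Rightarrow> real) \<Rightarrow> real \<Rightarrow> real" where
  "bernstein n f x = (\<Sum>k=0..n. real (n choose k) * x ^ k * (1 - x) ^ (n - k) * f (real k / real n))"

definition unorm :: "(real \<Rightarrow> real) \<Rightarrow> real" where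
  "unorm h = (SUP x\<in>{0..1}. \<bar>h x\<bar>)"

definition omega3 :: "(real \<Rightarrow> real) \<Rightarrow> real \<Rightarrow> real" where
  "omega3 h \<delta> = Sup {\<bar>h (x + 3*t) - 3 * h (x + 2*t) + 3 * h (x + t) - h x\<bar> | x t.
      0 < t \<and> t \<le> \<delta> \<and> 0 \<le> x \<and> x + 3*t \<le> 1}"

definition C1_on_unit :: "(real \<Rightarrow> real) \<Rightarrow> (real \<Rightarrow> real) \<Rightarrow> bool" where
  "C1_on_unit f f' \<longleftrightarrow> continuous_on {0..1} f' \<and>
     (\<forall>x\<in>{0..1}. (f has_real_derivative f' x) (at x within {0..1}))"

end

theory Submission
  imports Defs
begin


lemma bern_shift:
  "(\<Sum>k\<le>Suc m. real k * g k * Bernstein (Suc m) k x) =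
     real (Suc m) * x * (\<Sum>k\<le>m. g (Suc k) * Bernstein m k x)"
proof -
  have "(\<Sum>k\<le>Suc m. real k * g k * Bernstein (Suc m) k x) =
        (\<Sum>k\<le>m. real (Suc k) * g (Suc k) * Bernstein (Suc m) (Suc k) x)"
    by (simp only: sum.atMost_Suc_shift)
  also have "\<dots> = (\<Sum>k\<le>m. real (Suc m) * x * (g (Suc k) * Bernstein m k x))"
  proof (rule sum.cong[OF refl])
    fix k assume "k \<in> {..m}"
    have e: "real (Suc k) * real (Suc m choose Suc k) = real (Suc m) * real (m choose k)"
      by (simp only: of_nat_mult[symmetric] Suc_times_binomial)
    have "real (Suc k) * g (Suc k) * Bernstein (Suc m) (Suc k) x
        = (real (Suc k) * real (Suc m choose Suc k)) * g (Suc k) * x ^ Suc k * (1-x)^(m-k)"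
      by (simp add: Bernstein_def)
    also have "\<dots> = real (Suc m) * x * (g (Suc k) * Bernstein m k x)"
      unfolding e by (simp add: Bernstein_def)
    finally show "real (Suc k) * g (Suc k) * Bernstein (Suc m) (Suc k) x = real (Suc m) * x * (g (Suc k) * Bernstein m k x)" .
  qed
  also have "\<dots> = real (Suc m) * x * (\<Sum>k\<le>m. g (Suc k) * Bernstein m k x)"
    by (simp add: sum_distrib_left)
  finally show ?thesis .
qed

lemma F1: "(\<Sum>k\<le>n. real k * Bernstein n k x) = real n * x" by simp

lemma F2: "(\<Sum>k\<le>n. real k * (real k - 1) * Bernstein n k x) = real n * (real n - 1) * x^2"
  by simp

lemma F3: "(\<Sum>k\<le>n. real k * ((real k - 1) * (real k - 2)) * Bernstein n k x) =
   real n * (real n - 1) * (real n - 2) * x^3"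
proof (cases n)
  case 0 then show ?thesis by simp
next
  case (Suc m)
  have "(\<Sum>k\<le>n. real k * ((real k - 1) * (real k - 2)) * Bernstein n k x)
     = real n * x * (\<Sum>k\<le>m. ((real (Suc k) - 1) * (real (Suc k) - 2)) * Bernstein m k x)"
    unfolding Suc by (rule bern_shift)
  also have "(\<Sum>k\<le>m. ((real (Suc k) - 1) * (real (Suc k) - 2)) * Bernstein m k x)
     = (\<Sum>k\<le>m. real k * (real k - 1) * Bernstein m k x)"
    by (rule sum.cong) (auto simp: algebra_simps)
  also have "\<dots> = real m * (real m - 1) * x^2" by simp
  finally show ?thesis unfolding Suc by (simp add: algebra_simps power3_eq_cube power2_eq_square)
qed

lemma F4: "(\<Sum>k\<le>n. real k * ((real k - 1) * (real k - 2) * (real k - 3)) * Bernstein n k x) =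
   real n * (real n - 1) * (real n - 2) * (real n - 3) * x^4"
proof (cases n)
  case 0 then show ?thesis by simp
next
  case (Suc m)
  have "(\<Sum>k\<le>n. real k * ((real k - 1) * (real k - 2) * (real k - 3)) * Bernstein n k x)
     = real n * x * (\<Sum>k\<le>m. ((real (Suc k) - 1) * (real (Suc k) - 2) * (real (Suc k) - 3)) * Bernstein m k x)"
    unfolding Suc by (rule bern_shift)
  also have "(\<Sum>k\<le>m. ((real (Suc k) - 1) * (real (Suc k) - 2) * (real (Suc k) - 3)) * Bernstein m k x)
     = (\<Sum>k\<le>m. real k * ((real k - 1) * (real k - 2)) * Bernstein m k x)"
    by (rule sum.cong) (auto simp: algebra_simps)
  also have "\<dots> = real m * (real m - 1) * (real m - 2) * x^3" by (rule F3)
  finally show ?thesis unfolding Suc by (simp add: algebra_simps power3_eq_cube power2_eq_square power4_eq_xxxx)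
qed

definition EE :: "nat \<Rightarrow> real \<Rightarrow> (real \<Rightarrow> real) \<Rightarrow> real" where
  "EE n x g = (\<Sum>k\<le>n. Bernstein n k x * g (real k / real n))"

lemma bernstein_Ex: "bernstein n g x = EE n x g"
  unfolding bernstein_def EE_def Bernstein_def atLeast0AtMost
  by (rule sum.cong) (auto simp: algebra_simps)

lemma C2: "(\<Sum>k\<le>n. (real k - real n * x)^2 * Bernstein n k x) = real n * x * (1 - x)"
proof -
  have p: "(real k - real n * x)^2 * Bernstein n k x = real k * (real k - 1) * Bernstein n k x
      + (1 - 2 * (real n * x)) * (real k * Bernstein n k x) + (real n * x)^2 * Bernstein n k x" for k
    by (simp add: algebra_simps power2_eq_square)
  show ?thesis unfolding p sum.distrib sum_distrib_left[symmetric] F1 F2 sum_Bernstein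
    by (simp add: algebra_simps power2_eq_square)
qed

lemma C3: "(\<Sum>k\<le>n. (real k - real n * x)^3 * Bernstein n k x) = real n * x * (1 - x) * (1 - 2*x)"
proof -
  have p: "(real k - real n * x)^3 * Bernstein n k x = real k * ((real k - 1) * (real k - 2)) * Bernstein n k x
      + (3 - 3 * (real n * x)) * (real k * (real k - 1) * Bernstein n k x)
      + (1 - 3 * (real n * x) + 3 * (real n * x)^2) * (real k * Bernstein n k x)
      - (real n * x)^3 * Bernstein n k x" for k
    by (simp add: algebra_simps power2_eq_square power3_eq_cube)
  show ?thesis unfolding p sum.distrib sum_subtractf sum_distrib_left[symmetric] F1 F2 F3 sum_Bernstein
    by (simp add: algebra_simps power2_eq_square power3_eq_cube)
qed

lemma C4: "(\<Sum>k\<le>n. (real k - real n * x)^4 * Bernstein n k x) = real n * x * (1 - x) * (1 + 3 * (real n - 2) * x * (1 - x))"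
proof -
  have p: "(real k - real n * x)^4 * Bernstein n k x = real k * ((real k - 1) * (real k - 2) * (real k - 3)) * Bernstein n k x
      + (6 - 4 * (real n * x)) * (real k * ((real k - 1) * (real k - 2)) * Bernstein n k x)
      + (7 - 12 * (real n * x) + 6 * (real n * x)^2) * (real k * (real k - 1) * Bernstein n k x)
      + (1 - 4 * (real n * x) + 6 * (real n * x)^2 - 4 * (real n * x)^3) * (real k * Bernstein n k x)
      + (real n * x)^4 * Bernstein n k x" for k
    by (simp add: algebra_simps power2_eq_square power3_eq_cube power4_eq_xxxx)
  show ?thesis unfolding p sum.distrib sum_distrib_left[symmetric] F1 F2 F3 F4 sum_Bernstein
    by (simp add: algebra_simps power2_eq_square power3_eq_cube power4_eq_xxxx)
qed

lemma EE_central: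
  assumes "n \<ge> 1"
  shows "EE n x (\<lambda>y. (y - x)^m) = (\<Sum>k\<le>n. (real k - real n * x)^m * Bernstein n k x) / real n ^ m"
proof -
  have nz: "real n \<noteq> 0" using assms by simp
  have "(real k / real n - x)^m = (real k - real n * x)^m / real n ^ m" for k
    using nz by (simp add: power_divide[symmetric] diff_divide_distrib)
  then show ?thesis unfolding EE_def sum_divide_distrib
    by (intro sum.cong) (auto simp: algebra_simps)
qed


lemma grid01: "k \<le> n \<Longrightarrow> 1 \<le> n \<Longrightarrow> real k / real n \<in> {0..1}"
  by (auto simp: field_simps)

lemma EE_add: "EE n x (\<lambda>y. f y + g y) = EE n x f + EE n x g"
  unfolding EE_def by (simp add: algebra_simps sum.distrib)

lemma EE_diff: "EE n x (\<lambda>y. f y - g y) = EE n x f - EE n x g"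
  unfolding EE_def by (simp add: algebra_simps sum_subtractf)

lemma EE_cmul: "EE n x (\<lambda>y. c * f y) = c * EE n x f"
  unfolding EE_def by (simp add: algebra_simps sum_distrib_left)

lemma EE_const: "EE n x (\<lambda>y. c) = c"
  unfolding EE_def by (simp add: sum_distrib_right[symmetric])

lemma Bern_nonneg': "0 \<le> x \<Longrightarrow> x \<le> 1 \<Longrightarrow> 0 \<le> Bernstein n k x"
  by (rule Bernstein_nonneg)

lemma EE_mono:
  assumes "1 \<le> n" "0 \<le> x" "x \<le> 1" "\<And>y. y \<in> {0..1} \<Longrightarrow> f y \<le> g y"
  shows "EE n x f \<le> EE n x g"
  unfolding EE_def
  by (rule sum_mono) (use assms grid01 Bernstein_nonneg in \<open>auto intro!: mult_left_mono\<close>)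

lemma EE_cong:
  assumes "1 \<le> n" "\<And>y. y \<in> {0..1} \<Longrightarrow> f y = g y"
  shows "EE n x f = EE n x g"
  unfolding EE_def
  by (rule sum.cong) (use assms grid01 in auto)

lemma EE_abs:
  assumes "0 \<le> x" "x \<le> 1"
  shows "\<bar>EE n x f\<bar> \<le> EE n x (\<lambda>y. \<bar>f y\<bar>)"
  unfolding EE_def
  by (rule order_trans[OF sum_abs]) (use assms Bernstein_nonneg in \<open>auto simp: abs_mult\<close>)

lemma EE_nonneg:
  assumes "1 \<le> n" "0 \<le> x" "x \<le> 1" "\<And>y. y \<in> {0..1} \<Longrightarrow> 0 \<le> f y"
  shows "0 \<le> EE n x f"
  using EE_mono[OF assms(1-3), of "\<lambda>y. 0" f] assms(4) by (simp add: EE_const)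

lemma mom1: "1 \<le> n \<Longrightarrow> EE n x (\<lambda>y. y - x) = 0"
proof -
  assume n: "1 \<le> n"
  have "EE n x (\<lambda>y. y - x) = EE n x (\<lambda>y. (y - x)^1)" by simp
  also have "\<dots> = (\<Sum>k\<le>n. (real k - real n * x)^1 * Bernstein n k x) / real n ^ 1"
    by (rule EE_central[OF n])
  also have "(\<Sum>k\<le>n. (real k - real n * x)^1 * Bernstein n k x) = 0"
    by (simp add: algebra_simps sum_subtractf sum_distrib_left[symmetric])
  finally show ?thesis by simp
qed

lemma mom2: "1 \<le> n \<Longrightarrow> EE n x (\<lambda>y. (y - x)^2) = x * (1 - x) / n"
  by (subst EE_central, assumption, subst C2) (simp add: field_simps power2_eq_square)

lemma mom3: "1 \<le> n \<Longrightarrow> EE n x (\<lambda>y. (y - x)^3) = x * (1 - x) / n * (1 - 2*x) / n"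
  by (subst EE_central, assumption, subst C3) (simp add: field_simps power3_eq_cube)

lemma mom4: "1 \<le> n \<Longrightarrow> EE n x (\<lambda>y. (y - x)^4) = x * (1 - x) / n * (1 + 3 * (real n - 2) * x * (1 - x)) / n^2"
  by (subst EE_central, assumption, subst C4) (simp add: field_simps power4_eq_xxxx power2_eq_square)


definition cov :: "nat \<Rightarrow> real \<Rightarrow> (real \<Rightarrow> real) \<Rightarrow> (real \<Rightarrow> real) \<Rightarrow> real" where
  "cov n x a b = EE n x (\<lambda>y. a y * b y) - EE n x a * EE n x b"

locale setting =
  fixes n :: nat and x :: real
  assumes n1: "1 \<le> n" and x0: "0 \<le> x" and x1: "x \<le> 1"
begin

abbreviation "E \<equiv> EE n x"
definition "s2 = x * (1 - x) / n"
definition "r = sqrt (real n)"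

lemma r_ge1: "1 \<le> r" using n1 by (simp add: r_def)
lemma r_sq: "r * r = real n" by (simp add: r_def)
lemma r_pos: "0 < r" using r_ge1 by simp
lemma r_le_n: "r \<le> real n"
proof -
  have "r * 1 \<le> r * r" using r_ge1 by (intro mult_left_mono) auto
  then show ?thesis using r_sq by simp
qed
lemma n_pos: "0 < real n" using n1 by simp

lemma s2_nonneg: "0 \<le> s2" using x0 x1 n1 by (simp add: s2_def)
lemma xx_le: "x * (1 - x) \<le> 1/4"
proof -
  have "0 \<le> (x - 1/2)^2" by simp
  then show ?thesis by (simp add: power2_eq_square algebra_simps)
qed
lemma s2_le: "s2 \<le> 1 / (4 * n)"
proof -
  have "x*(1-x)/n \<le> (1/4)/n" using xx_le n_pos by (intro divide_right_mono) auto
  then show ?thesis by (simp add: s2_def)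
qed
lemma s2_le4: "s2 \<le> 1/4"
proof -
  have "1 / (4 * real n) \<le> 1/4" using n1 by (simp add: field_simps)
  then show ?thesis using s2_le by linarith
qed

lemma absu: "y \<in> {0..1} \<Longrightarrow> \<bar>y - x\<bar> \<le> 1" using x0 x1 by auto

lemma E_u1: "E (\<lambda>y. y - x) = 0" using mom1 n1 by simp
lemma E_u2: "E (\<lambda>y. (y - x)^2) = s2" using mom2 n1 by (simp add: s2_def)
lemma E_u3: "E (\<lambda>y. (y - x)^3) = s2 * (1 - 2*x) / n" using mom3 n1 by (simp add: s2_def)
lemma E_u4: "E (\<lambda>y. (y - x)^4) = s2 * (1 + 3 * (real n - 2) * x * (1 - x)) / n^2"
  using mom4 n1 by (simp add: s2_def)

lemma E_u3_abs: "\<bar>E (\<lambda>y. (y - x)^3)\<bar> \<le> s2 / n"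
proof -
  have "\<bar>1 - 2*x\<bar> \<le> 1" using x0 x1 by auto
  then have "\<bar>s2 * (1 - 2*x) / n\<bar> \<le> s2 / n" using s2_nonneg n_pos
    by (simp add: abs_mult divide_right_mono mult_left_le)
  then show ?thesis using E_u3 by simp
qed

lemma E_u4_le: "E (\<lambda>y. (y - x)^4) \<le> 2 * s2 / n"
proof -
  have a: "1 + 3 * (real n - 2) * x * (1 - x) \<le> 2 * real n"
  proof (cases "real n \<ge> 2")
    case True
    have "3 * (real n - 2) * (x * (1 - x)) \<le> 3 * (real n - 2) * (1/4)"
      using xx_le True by (intro mult_left_mono) auto
    then show ?thesis using True by (simp add: algebra_simps)
  next
    case False
    have "0 \<le> x * (1 - x)" using x0 x1 by simp
    then have "3 * (real n - 2) * (x * (1 - x)) \<le> 0" using False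
      by (simp add: mult_nonpos_nonneg)
    then show ?thesis using n1 by (simp add: algebra_simps)
  qed
  have "s2 * (1 + 3 * (real n - 2) * x * (1 - x)) / n^2 \<le> s2 * (2 * real n) / n^2"
    using a s2_nonneg by (intro divide_right_mono mult_left_mono) auto
  also have "\<dots> = 2 * s2 / n" using n_pos by (simp add: power2_eq_square field_simps)
  finally show ?thesis using E_u4 by simp
qed

lemma E_u4_nonneg: "0 \<le> E (\<lambda>y. (y - x)^4)"
  using EE_nonneg[OF n1 x0 x1, of "\<lambda>y. (y - x)^4"] by simp

lemma e1_sq: "(E (\<lambda>y. \<bar>y - x\<bar>))^2 \<le> s2"
proof -
  define c where "c = E (\<lambda>y. \<bar>y - x\<bar>)"
  have "0 \<le> E (\<lambda>y. (\<bar>y - x\<bar> - c)^2)"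
    by (rule EE_nonneg[OF n1 x0 x1]) simp
  also have "E (\<lambda>y. (\<bar>y - x\<bar> - c)^2) = E (\<lambda>y. (y - x)^2 + ((-2*c) * \<bar>y - x\<bar> + c^2))"
    by (rule arg_cong[where f=E], rule ext) (simp add: power2_eq_square algebra_simps)
  also have "\<dots> = s2 - c^2"
    unfolding EE_add EE_cmul EE_const E_u2 c_def[symmetric] by (simp add: power2_eq_square)
  finally show ?thesis unfolding c_def by simp
qed

lemma e1_nonneg: "0 \<le> E (\<lambda>y. \<bar>y - x\<bar>)"
  by (rule EE_nonneg[OF n1 x0 x1]) simp

lemma e1_le: "E (\<lambda>y. \<bar>y - x\<bar>) \<le> 1 / (2 * r)"
proof -
  have q: "(1 / (2 * r))^2 = 1 / (4 * real n)" using r_sq by (simp add: power2_eq_square)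
  have "(E (\<lambda>y. \<bar>y - x\<bar>))^2 \<le> (1 / (2 * r))^2"
    unfolding q using e1_sq s2_le by linarith
  then show ?thesis using e1_nonneg r_pos by (simp add: power2_le_iff_abs_le)
qed

lemma cov_bound:
  assumes a: "\<And>y. y \<in> {0..1} \<Longrightarrow> \<bar>a y\<bar> \<le> \<alpha> y"
    and b: "\<And>y. y \<in> {0..1} \<Longrightarrow> \<bar>b y\<bar> \<le> \<beta> y"
  shows "\<bar>cov n x a b\<bar> \<le> E (\<lambda>y. \<alpha> y * \<beta> y) + E \<alpha> * E \<beta>"
proof -
  have 1: "\<bar>E (\<lambda>y. a y * b y)\<bar> \<le> E (\<lambda>y. \<alpha> y * \<beta> y)"
    apply (rule order_trans[OF EE_abs[OF x0 x1]])
    apply (rule EE_mono[OF n1 x0 x1])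
  proof -
    fix y :: real assume y: "y \<in> {0..1}"
    have "\<bar>a y\<bar> * \<bar>b y\<bar> \<le> \<alpha> y * \<beta> y"
      using a[OF y] b[OF y] by (intro mult_mono) auto
    then show "\<bar>a y * b y\<bar> \<le> \<alpha> y * \<beta> y" by (simp add: abs_mult)
  qed
  have 2: "\<bar>E a\<bar> \<le> E \<alpha>"
    by (rule order_trans[OF EE_abs[OF x0 x1]]) (rule EE_mono[OF n1 x0 x1], use a in auto)
  have 3: "\<bar>E b\<bar> \<le> E \<beta>"
    by (rule order_trans[OF EE_abs[OF x0 x1]]) (rule EE_mono[OF n1 x0 x1], use b in auto)
  have 4: "\<bar>E a\<bar> * \<bar>E b\<bar> \<le> E \<alpha> * E \<beta>"
    using 2 3 by (intro mult_mono) auto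
  have 5: "\<bar>E a * E b\<bar> = \<bar>E a\<bar> * \<bar>E b\<bar>" by (simp add: abs_mult)
  have "\<bar>E (\<lambda>y. a y * b y) - E a * E b\<bar> \<le> \<bar>E (\<lambda>y. a y * b y)\<bar> + \<bar>E a * E b\<bar>"
    by (rule abs_triangle_ineq4)
  then show ?thesis unfolding cov_def using 1 4 5 by linarith
qed

lemma cov_add_l: "cov n x (\<lambda>y. a y + b y) c = cov n x a c + cov n x b c"
  unfolding cov_def by (simp add: distrib_right EE_add algebra_simps)
lemma cov_add_r: "cov n x c (\<lambda>y. a y + b y) = cov n x c a + cov n x c b"
  unfolding cov_def by (simp add: distrib_left EE_add algebra_simps)
lemma cov_cmul_l: "cov n x (\<lambda>y. k * a y) c = k * cov n x a c"
  unfolding cov_def by (simp add: mult.assoc EE_cmul algebra_simps)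
lemma cov_cmul_r: "cov n x c (\<lambda>y. k * a y) = k * cov n x c a"
proof -
  have "EE n x (\<lambda>y. c y * (k * a y)) = EE n x (\<lambda>y. k * (c y * a y))"
    by (simp add: algebra_simps)
  then show ?thesis unfolding cov_def by (simp add: EE_cmul algebra_simps)
qed
lemma cov_const_l: "cov n x (\<lambda>y. k) c = 0"
  unfolding cov_def by (simp add: EE_cmul EE_const)
lemma cov_const_r: "cov n x c (\<lambda>y. k) = 0"
  unfolding cov_def by (simp add: EE_cmul EE_const mult.commute)
lemma cov_sym: "cov n x a b = cov n x b a"
  unfolding cov_def by (simp add: mult.commute)

end


context setting
begin

definition "w y = \<bar>y - x\<bar> + r * (y - x)^4"

lemma w_nonneg: "0 \<le> w y" using r_pos by (simp add: w_def)

lemma u4_abs: "(y - x)^4 = \<bar>y - x\<bar>^4" by (simp add: power_even_abs)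
lemma u2_abs: "(y - x)^2 = \<bar>y - x\<bar>^2" by simp

lemma E_w: "E w = E (\<lambda>y. \<bar>y - x\<bar>) + r * E (\<lambda>y. (y - x)^4)"
  unfolding w_def by (simp add: EE_add EE_cmul)

lemma rs2: "r * (2 * s2 / real n) = 2 * s2 / r"
  unfolding r_sq[symmetric] using r_pos by (simp add: field_simps)

lemma E_w_le: "E w \<le> E (\<lambda>y. \<bar>y - x\<bar>) + 2 * s2 / r"
proof -
  have "r * E (\<lambda>y. (y - x)^4) \<le> r * (2 * s2 / real n)"
    using E_u4_le r_pos by (intro mult_left_mono) auto
  then show ?thesis unfolding E_w rs2 by linarith
qed

lemma s2r: "2 * s2 / r \<le> 1 / (2 * r)"
proof -
  have "2 * s2 \<le> 1/2" using s2_le4 by linarith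
  then have "2 * s2 / r \<le> (1/2) / r" using r_pos by (intro divide_right_mono) auto
  then show ?thesis by simp
qed

lemma E_w_le2: "E w \<le> 1 / r"
proof -
  have "1 / (2 * r) + 1 / (2 * r) = 1 / r" using r_pos by (simp add: field_simps)
  then show ?thesis using E_w_le e1_le s2r by linarith
qed

lemma E_w_sq: "(E w)^2 \<le> 4 * s2"
proof -
  define e where "e = E (\<lambda>y. \<bar>y - x\<bar>)"
  have e0: "0 \<le> e" unfolding e_def by (rule e1_nonneg)
  have w0: "0 \<le> E w" by (rule EE_nonneg[OF n1 x0 x1]) (simp add: w_nonneg)
  have "(E w)^2 \<le> (e + 2 * s2 / r)^2"
    using E_w_le w0 unfolding e_def by (intro power_mono) auto
  also have "\<dots> \<le> 2 * e^2 + 2 * (2 * s2 / r)^2"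
  proof -
    have "(e + 2 * s2 / r)^2 = 2 * e^2 + 2 * (2 * s2 / r)^2 - (e - 2 * s2 / r)^2"
      by (simp add: power2_eq_square algebra_simps)
    moreover have "0 \<le> (e - 2 * s2 / r)^2" by simp
    ultimately show ?thesis by linarith
  qed
  also have "(2 * s2 / r)^2 = 4 * s2 * (s2 / real n)"
    using r_sq r_pos by (simp add: power2_eq_square field_simps)
  also have "s2 / real n \<le> 1/4"
  proof -
    have "1 * s2 \<le> real n * s2" using n1 s2_nonneg by (intro mult_right_mono) auto
    then have "s2 / real n \<le> s2" using n_pos by (simp add: divide_le_eq mult.commute)
    then show ?thesis using s2_le4 by linarith
  qed
  then have "2 * e^2 + 2 * (4 * s2 * (s2 / real n)) \<le> 2 * s2 + 2 * (4 * s2 * (1/4))"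
    using e1_sq s2_nonneg unfolding e_def by (intro add_mono mult_left_mono) auto
  finally show ?thesis by simp
qed

lemma P1: "y \<in> {0..1} \<Longrightarrow> \<bar>y - x\<bar> * w y \<le> (y - x)^2 + r * (y - x)^4"
proof -
  assume y: "y \<in> {0..1}"
  define t where "t = \<bar>y - x\<bar>"
  have t0: "0 \<le> t" and t1: "t \<le> 1" using absu[OF y] by (auto simp: t_def)
  have "t^5 \<le> t^4" using t0 t1 by (simp add: power_decreasing)
  then have "r * t^5 \<le> r * t^4" using r_pos by (intro mult_left_mono) auto
  moreover have "t * (t + r * t^4) = t^2 + r * t^5" by (simp add: algebra_simps power2_eq_square eval_nat_numeral)
  ultimately have "t * (t + r * t^4) \<le> t^2 + r * t^4" by linarith
  then show ?thesis unfolding w_def u4_abs[of y] u2_abs[of y] t_def by simp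
qed


lemma P2: "y \<in> {0..1} \<Longrightarrow> (y - x)^2 * w y \<le> (1 / (2 * r)) * (y - x)^2 + (3/2) * r * (y - x)^4"
proof -
  assume y: "y \<in> {0..1}"
  define t where "t = \<bar>y - x\<bar>"
  have t0: "0 \<le> t" and t1: "t \<le> 1" using absu[OF y] by (auto simp: t_def)
  have "t^6 \<le> t^4" using t0 t1 by (simp add: power_decreasing)
  then have a: "r * t^6 \<le> r * t^4" using r_pos by (intro mult_left_mono) auto
  have "0 \<le> t^2 * (1 - r * t)^2 / r" using r_pos by simp
  moreover have "t^2 * (1 - r * t)^2 / r = t^2 / r - 2 * t^3 + r * t^4"
    using r_pos by (simp add: field_simps power2_eq_square eval_nat_numeral)
  ultimately have b: "t^3 \<le> (1 / (2 * r)) * t^2 + (1/2) * r * t^4" by (simp add: field_simps)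
  have "t^2 * (t + r * t^4) = t^3 + r * t^6" by (simp add: algebra_simps eval_nat_numeral)
  then have "t^2 * (t + r * t^4) \<le> (1 / (2 * r)) * t^2 + (3/2) * r * t^4" using a b by linarith
  then show ?thesis unfolding w_def u4_abs[of y] u2_abs[of y] t_def by simp
qed

lemma P3: "y \<in> {0..1} \<Longrightarrow> w y * w y \<le> (y - x)^2 + (2 * r + real n) * (y - x)^4"
proof -
  assume y: "y \<in> {0..1}"
  define t where "t = \<bar>y - x\<bar>"
  have t0: "0 \<le> t" and t1: "t \<le> 1" using absu[OF y] by (auto simp: t_def)
  have "t^5 \<le> t^4" "t^8 \<le> t^4" using t0 t1 by (simp_all add: power_decreasing)
  then have a: "2 * r * t^5 \<le> 2 * r * t^4" "real n * t^8 \<le> real n * t^4" using r_pos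
    by (auto intro!: mult_left_mono)
  have "(t + r * t^4) * (t + r * t^4) = t^2 + 2 * r * t^5 + (r * r) * t^8"
    by (simp add: algebra_simps eval_nat_numeral)
  then have "(t + r * t^4) * (t + r * t^4) \<le> t^2 + (2 * r + real n) * t^4"
    using a r_sq by (simp add: algebra_simps)
  then show ?thesis unfolding w_def u4_abs[of y] u2_abs[of y] t_def by simp
qed

lemma EP1: "E (\<lambda>y. (y - x)^2 + r * (y - x)^4) \<le> 3 * s2"
proof -
  have "r * E (\<lambda>y. (y - x)^4) \<le> r * (2 * s2 / real n)"
    using E_u4_le r_pos by (intro mult_left_mono) auto
  moreover have "2 * s2 / r \<le> 2 * s2"
  proof -
    have "1 * (2 * s2) \<le> r * (2 * s2)" using r_ge1 s2_nonneg by (intro mult_right_mono) auto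
    then show ?thesis using r_pos by (simp add: divide_le_eq mult.commute)
  qed
  ultimately show ?thesis unfolding EE_add EE_cmul E_u2 rs2 by linarith
qed

lemma EP2: "E (\<lambda>y. (1 / (2 * r)) * (y - x)^2 + (3/2) * r * (y - x)^4) \<le> 7/2 * s2 / r"
proof -
  have "r * E (\<lambda>y. (y - x)^4) \<le> r * (2 * s2 / real n)"
    using E_u4_le r_pos by (intro mult_left_mono) auto
  then have "(3/2) * (r * E (\<lambda>y. (y - x)^4)) \<le> (3/2) * (2 * s2 / r)" unfolding rs2 by linarith
  moreover have "E (\<lambda>y. (1 / (2 * r)) * (y - x)^2 + (3/2) * r * (y - x)^4)
       = s2 / (2 * r) + (3/2) * (r * E (\<lambda>y. (y - x)^4))"
    unfolding EE_add mult.assoc EE_cmul E_u2 by simp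
  moreover have "s2 / (2 * r) + (3/2) * (2 * s2 / r) = 7/2 * s2 / r" using r_pos by (simp add: field_simps)
  ultimately show ?thesis by linarith
qed

lemma EP3: "E (\<lambda>y. (y - x)^2 + (2 * r + real n) * (y - x)^4) \<le> 7 * s2"
proof -
  have "(2 * r + real n) * E (\<lambda>y. (y - x)^4) \<le> (2 * r + real n) * (2 * s2 / real n)"
    using E_u4_le r_pos by (intro mult_left_mono) auto
  moreover have "(2 * r + real n) * (2 * s2 / real n) \<le> 6 * s2"
  proof -
    have "(2 * r + real n) * (2 * s2 / real n) = (2 * r / real n + 1) * (2 * s2)" using n_pos by (simp add: field_simps)
    moreover have "2 * r / real n \<le> 2" using r_le_n n_pos by (simp add: divide_le_eq)
    moreover have "(2 * r / real n + 1) * (2 * s2) \<le> 3 * (2 * s2)"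
      using calculation(2) s2_nonneg by (intro mult_right_mono) auto
    ultimately show ?thesis by linarith
  qed
  ultimately show ?thesis unfolding EE_add EE_cmul E_u2 by linarith
qed

end


context setting
begin

lemma E_mul_w: "E (\<lambda>y. c * w y) = c * E w" by (rule EE_cmul)

lemma T_Upsi:
  assumes B: "0 \<le> B" and psi: "\<And>y. y \<in> {0..1} \<Longrightarrow> \<bar>\<psi> y\<bar> \<le> B * w y"
  shows "\<bar>cov n x (\<lambda>y. y - x) \<psi>\<bar> \<le> 5 * B * s2"
proof -
  have c: "\<bar>cov n x (\<lambda>y. y - x) \<psi>\<bar> \<le> E (\<lambda>y. \<bar>y - x\<bar> * (B * w y)) + E (\<lambda>y. \<bar>y - x\<bar>) * E (\<lambda>y. B * w y)"
    by (rule cov_bound) (auto intro: psi)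
  have "E (\<lambda>y. \<bar>y - x\<bar> * (B * w y)) = B * E (\<lambda>y. \<bar>y - x\<bar> * w y)"
    by (subst EE_cmul[symmetric]) (simp add: algebra_simps)
  also have "E (\<lambda>y. \<bar>y - x\<bar> * w y) \<le> E (\<lambda>y. (y - x)^2 + r * (y - x)^4)"
    by (rule EE_mono[OF n1 x0 x1]) (rule P1)
  then have "B * E (\<lambda>y. \<bar>y - x\<bar> * w y) \<le> B * (3 * s2)" using EP1 B
    by (intro mult_left_mono) auto
  finally have 1: "E (\<lambda>y. \<bar>y - x\<bar> * (B * w y)) \<le> B * (3 * s2)" .
  define e where "e = E (\<lambda>y. \<bar>y - x\<bar>)"
  have e0: "0 \<le> e" unfolding e_def by (rule e1_nonneg)
  have "e * E w \<le> e * (e + 2 * s2 / r)" using E_w_le e0 unfolding e_def by (intro mult_left_mono) auto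
  also have "\<dots> = e^2 + e * (2 * s2 / r)" by (simp add: power2_eq_square algebra_simps)
  also have "e * (2 * s2 / r) \<le> (1 / (2 * r)) * (2 * s2 / r)"
    using e1_le s2_nonneg r_pos unfolding e_def by (intro mult_right_mono) auto
  also have "(1 / (2 * r)) * (2 * s2 / r) = s2 / real n" unfolding r_sq[symmetric] using r_pos by (simp add: field_simps)
  also have "s2 / real n \<le> s2"
  proof -
    have "1 * s2 \<le> real n * s2" using n1 s2_nonneg by (intro mult_right_mono) auto
    then show ?thesis using n_pos by (simp add: divide_le_eq mult.commute)
  qed
  finally have "e * E w \<le> e^2 + s2" by simp
  then have "e * E w \<le> 2 * s2" using e1_sq unfolding e_def by linarith
  then have 2: "e * E (\<lambda>y. B * w y) \<le> B * (2 * s2)" unfolding EE_cmul using B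
    by (simp add: mult.left_commute mult_left_mono)
  show ?thesis using c 1 2 unfolding e_def by (simp add: algebra_simps)
qed

lemma T_Rpsi:
  assumes B: "0 \<le> B" and M: "0 \<le> M"
    and psi: "\<And>y. y \<in> {0..1} \<Longrightarrow> \<bar>\<psi> y\<bar> \<le> B * w y"
    and R: "\<And>y. y \<in> {0..1} \<Longrightarrow> \<bar>R y\<bar> \<le> 2 * M * (y - x)^2"
  shows "\<bar>cov n x R \<psi>\<bar> \<le> 9 * M * B * s2 / r"
proof -
  have c: "\<bar>cov n x R \<psi>\<bar> \<le> E (\<lambda>y. 2 * M * (y - x)^2 * (B * w y)) + E (\<lambda>y. 2 * M * (y - x)^2) * E (\<lambda>y. B * w y)"
    by (rule cov_bound) (auto intro: psi R)
  have "E (\<lambda>y. 2 * M * (y - x)^2 * (B * w y)) = (2 * M * B) * E (\<lambda>y. (y - x)^2 * w y)"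
    by (subst EE_cmul[symmetric]) (simp add: algebra_simps)
  also have "E (\<lambda>y. (y - x)^2 * w y) \<le> E (\<lambda>y. (1 / (2 * r)) * (y - x)^2 + (3/2) * r * (y - x)^4)"
    by (rule EE_mono[OF n1 x0 x1]) (rule P2)
  then have "(2 * M * B) * E (\<lambda>y. (y - x)^2 * w y) \<le> (2 * M * B) * (7/2 * s2 / r)" using EP2 B M
    by (intro mult_left_mono) auto
  finally have 1: "E (\<lambda>y. 2 * M * (y - x)^2 * (B * w y)) \<le> (2 * M * B) * (7/2 * s2 / r)" .
  have "E (\<lambda>y. 2 * M * (y - x)^2) * E (\<lambda>y. B * w y) = (2 * M * B * s2) * E w"
    unfolding EE_cmul E_u2 by simp
  also have "\<dots> \<le> (2 * M * B * s2) * (1 / r)" using E_w_le2 B M s2_nonneg by (intro mult_left_mono) auto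
  finally have 2: "E (\<lambda>y. 2 * M * (y - x)^2) * E (\<lambda>y. B * w y) \<le> (2 * M * B * s2) * (1 / r)" .
  have "(2 * M * B) * (7/2 * s2 / r) + (2 * M * B * s2) * (1 / r) = 9 * M * B * s2 / r"
    using r_pos by (simp add: field_simps)
  then show ?thesis using c 1 2 by linarith
qed

lemma T_phipsi:
  assumes A: "0 \<le> A" and B: "0 \<le> B"
    and phi: "\<And>y. y \<in> {0..1} \<Longrightarrow> \<bar>\<phi> y\<bar> \<le> A * w y"
    and psi: "\<And>y. y \<in> {0..1} \<Longrightarrow> \<bar>\<psi> y\<bar> \<le> B * w y"
  shows "\<bar>cov n x \<phi> \<psi>\<bar> \<le> 11 * A * B * s2"
proof -
  have c: "\<bar>cov n x \<phi> \<psi>\<bar> \<le> E (\<lambda>y. A * w y * (B * w y)) + E (\<lambda>y. A * w y) * E (\<lambda>y. B * w y)"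
    by (rule cov_bound) (auto intro: psi phi)
  have "E (\<lambda>y. A * w y * (B * w y)) = (A * B) * E (\<lambda>y. w y * w y)"
    by (subst EE_cmul[symmetric]) (simp add: algebra_simps)
  also have "E (\<lambda>y. w y * w y) \<le> E (\<lambda>y. (y - x)^2 + (2 * r + real n) * (y - x)^4)"
    by (rule EE_mono[OF n1 x0 x1]) (rule P3)
  then have "(A * B) * E (\<lambda>y. w y * w y) \<le> (A * B) * (7 * s2)" using EP3 A B
    by (intro mult_left_mono) auto
  finally have 1: "E (\<lambda>y. A * w y * (B * w y)) \<le> (A * B) * (7 * s2)" .
  have "E (\<lambda>y. A * w y) * E (\<lambda>y. B * w y) = (A * B) * (E w)^2"
    unfolding EE_cmul by (simp add: power2_eq_square)
  also have "\<dots> \<le> (A * B) * (4 * s2)" using E_w_sq A B by (intro mult_left_mono) auto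
  finally have 2: "E (\<lambda>y. A * w y) * E (\<lambda>y. B * w y) \<le> (A * B) * (4 * s2)" .
  show ?thesis using c 1 2 by (simp add: algebra_simps)
qed

lemma T_RR:
  assumes M: "0 \<le> M" and M': "0 \<le> M'"
    and R: "\<And>y. y \<in> {0..1} \<Longrightarrow> \<bar>R y\<bar> \<le> 2 * M * (y - x)^2"
    and R': "\<And>y. y \<in> {0..1} \<Longrightarrow> \<bar>R' y\<bar> \<le> 2 * M' * (y - x)^2"
  shows "\<bar>cov n x R R'\<bar> \<le> 9 * M * M' * s2 / n"
proof -
  have c: "\<bar>cov n x R R'\<bar> \<le> E (\<lambda>y. 2 * M * (y - x)^2 * (2 * M' * (y - x)^2)) + E (\<lambda>y. 2 * M * (y - x)^2) * E (\<lambda>y. 2 * M' * (y - x)^2)"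
    by (rule cov_bound) (auto intro: R R')
  have "E (\<lambda>y. 2 * M * (y - x)^2 * (2 * M' * (y - x)^2)) = (4 * M * M') * E (\<lambda>y. (y - x)^4)"
    by (subst EE_cmul[symmetric]) (simp add: algebra_simps power4_eq_xxxx power2_eq_square)
  also have "\<dots> \<le> (4 * M * M') * (2 * s2 / n)" using E_u4_le M M' by (intro mult_left_mono) auto
  finally have 1: "E (\<lambda>y. 2 * M * (y - x)^2 * (2 * M' * (y - x)^2)) \<le> (4 * M * M') * (2 * s2 / n)" .
  have eq2: "E (\<lambda>y. 2 * M * (y - x)^2) * E (\<lambda>y. 2 * M' * (y - x)^2) = (4 * M * M') * (s2 * s2)"
    unfolding EE_cmul E_u2 by simp
  have "s2 * s2 \<le> s2 * (1 / (4 * n))" using s2_le s2_nonneg by (intro mult_left_mono) auto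
  then have "(4 * M * M') * (s2 * s2) \<le> (4 * M * M') * (s2 * (1 / (4 * n)))" using M M' s2_le s2_nonneg by (intro mult_left_mono mult_nonneg_nonneg) auto
  then have 2: "E (\<lambda>y. 2 * M * (y - x)^2) * E (\<lambda>y. 2 * M' * (y - x)^2) \<le> (4 * M * M') * (s2 * (1 / (4 * n)))" using eq2 by simp
  have "(4 * M * M') * (2 * s2 / n) + (4 * M * M') * (s2 * (1 / (4 * n))) = 9 * M * M' * s2 / n"
    using n_pos by (simp add: field_simps)
  then show ?thesis using c 1 2 by linarith
qed

lemma T_UR:
  assumes M: "0 \<le> M" and p2: "\<bar>p2\<bar> \<le> M" and p3: "\<bar>p3\<bar> \<le> M"
    and R: "\<And>y. y \<in> {0..1} \<Longrightarrow> R y = p2 * (y - x)^2 + p3 * (y - x)^3"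
  shows "\<bar>cov n x (\<lambda>y. y - x) R\<bar> \<le> 3 * M * s2 / n"
proof -
  have "cov n x (\<lambda>y. y - x) R = E (\<lambda>y. (y - x) * R y)" unfolding cov_def E_u1 by simp
  also have "\<dots> = E (\<lambda>y. p2 * (y - x)^3 + p3 * (y - x)^4)"
    by (rule EE_cong[OF n1]) (simp add: R algebra_simps eval_nat_numeral)
  also have "\<dots> = p2 * E (\<lambda>y. (y - x)^3) + p3 * E (\<lambda>y. (y - x)^4)" by (simp add: EE_add EE_cmul)
  finally have eq: "cov n x (\<lambda>y. y - x) R = p2 * E (\<lambda>y. (y - x)^3) + p3 * E (\<lambda>y. (y - x)^4)" .
  have "\<bar>p2 * E (\<lambda>y. (y - x)^3)\<bar> \<le> M * (s2 / n)"
    unfolding abs_mult using p2 E_u3_abs by (intro mult_mono) auto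
  moreover have "\<bar>p3 * E (\<lambda>y. (y - x)^4)\<bar> \<le> M * (2 * s2 / n)"
    unfolding abs_mult using p3 E_u4_le E_u4_nonneg by (intro mult_mono) auto
  moreover have "M * (s2 / n) + M * (2 * s2 / n) = 3 * M * s2 / n" by (simp add: field_simps)
  ultimately show ?thesis unfolding eq by (smt (verit) abs_triangle_ineq)
qed

end


lemma cov_cong: "1 \<le> n \<Longrightarrow> (\<And>y. y \<in> {0..1} \<Longrightarrow> f y = f' y) \<Longrightarrow> (\<And>y. y \<in> {0..1} \<Longrightarrow> g y = g' y)
   \<Longrightarrow> cov n x f g = cov n x f' g'"
proof -
  assume n: "1 \<le> n" and f: "\<And>y. y \<in> {0..1} \<Longrightarrow> f y = f' y" and g: "\<And>y. y \<in> {0..1} \<Longrightarrow> g y = g' y"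
  have 1: "EE n x (\<lambda>y. f y * g y) = EE n x (\<lambda>y. f' y * g' y)" by (rule EE_cong[OF n]) (simp add: f g)
  have 2: "EE n x f = EE n x f'" by (rule EE_cong[OF n]) (simp add: f)
  have 3: "EE n x g = EE n x g'" by (rule EE_cong[OF n]) (simp add: g)
  show ?thesis unfolding cov_def 1 2 3 ..
qed

context setting
begin

lemma R_bound:
  assumes "\<bar>p2\<bar> \<le> M" "\<bar>p3\<bar> \<le> M" "y \<in> {0..1}"
  shows "\<bar>p2 * (y - x)^2 + p3 * (y - x)^3\<bar> \<le> 2 * M * (y - x)^2"
proof -
  define t where "t = \<bar>y - x\<bar>"
  have t0: "0 \<le> t" unfolding t_def by simp
  have t1: "t \<le> 1" unfolding t_def using absu[OF assms(3)] by simp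
  have "t^3 \<le> t^2" using t0 t1 by (simp add: power_decreasing)
  have "\<bar>p2 * (y - x)^2 + p3 * (y - x)^3\<bar> \<le> \<bar>p2\<bar> * t^2 + \<bar>p3\<bar> * t^3"
    unfolding t_def by (metis abs_mult abs_triangle_ineq power_abs)
  also have "\<dots> \<le> M * t^2 + M * t^3" using assms t0 by (intro add_mono mult_right_mono) auto
  also have "\<dots> \<le> M * t^2 + M * t^2" using \<open>t^3 \<le> t^2\<close> assms(1) by (intro add_mono mult_left_mono) auto
  finally show ?thesis unfolding t_def by simp
qed

lemma core:
  assumes A: "0 \<le> A" and B: "0 \<le> B" and M: "0 \<le> M" and Mg: "0 \<le> Mg"
    and p1N: "\<bar>p1\<bar> \<le> N1" and p1: "\<bar>p1\<bar> \<le> M" and p2: "\<bar>p2\<bar> \<le> M" and p3: "\<bar>p3\<bar> \<le> M"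
    and q1N: "\<bar>q1\<bar> \<le> N2" and q1: "\<bar>q1\<bar> \<le> Mg" and q2: "\<bar>q2\<bar> \<le> Mg" and q3: "\<bar>q3\<bar> \<le> Mg"
    and phi: "\<And>y. y \<in> {0..1} \<Longrightarrow> \<bar>\<phi> y\<bar> \<le> A * w y"
    and psi: "\<And>y. y \<in> {0..1} \<Longrightarrow> \<bar>\<psi> y\<bar> \<le> B * w y"
    and f: "\<And>y. y \<in> {0..1} \<Longrightarrow> f y = p0 + p1 * (y - x) + (p2 * (y - x)^2 + p3 * (y - x)^3) + \<phi> y"
    and g: "\<And>y. y \<in> {0..1} \<Longrightarrow> g y = q0 + q1 * (y - x) + (q2 * (y - x)^2 + q3 * (y - x)^3) + \<psi> y"
  shows "real n * \<bar>E (\<lambda>y. f y * g y) - E f * E g - x * (1 - x) / n * p1 * q1\<bar>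
     \<le> x * (1 - x) * (11 * A * B + 5 * (N1 * B + N2 * A) + 9 * (M * B + Mg * A) / r + 15 * M * Mg / n)"
proof -
  define RF where "RF = (\<lambda>y. p2 * (y - x)^2 + p3 * (y - x)^3)"
  define RG where "RG = (\<lambda>y. q2 * (y - x)^2 + q3 * (y - x)^3)"
  define U where "U = (\<lambda>y::real. y - x)"
  have "E (\<lambda>y. f y * g y) - E f * E g = cov n x f g" unfolding cov_def by simp
  also have "\<dots> = cov n x (\<lambda>y. p0 + p1 * U y + RF y + \<phi> y) (\<lambda>y. q0 + q1 * U y + RG y + \<psi> y)"
    by (rule cov_cong[OF n1]) (simp_all add: f g RF_def RG_def U_def)
  also have "\<dots> = p1 * q1 * cov n x U U + p1 * cov n x U RG + p1 * cov n x U \<psi>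
     + q1 * cov n x RF U + cov n x RF RG + cov n x RF \<psi>
     + q1 * cov n x \<phi> U + cov n x \<phi> RG + cov n x \<phi> \<psi>"
    by (simp add: cov_add_l cov_add_r cov_cmul_l cov_cmul_r cov_const_l cov_const_r algebra_simps)
  finally have eq: "E (\<lambda>y. f y * g y) - E f * E g = p1 * q1 * cov n x U U + p1 * cov n x U RG + p1 * cov n x U \<psi>
     + q1 * cov n x RF U + cov n x RF RG + cov n x RF \<psi>
     + q1 * cov n x \<phi> U + cov n x \<phi> RG + cov n x \<phi> \<psi>" .
  have UU: "cov n x U U = s2" unfolding cov_def U_def E_u1 using E_u2 by (simp add: power2_eq_square)
  have RFb: "\<And>y. y \<in> {0..1} \<Longrightarrow> \<bar>RF y\<bar> \<le> 2 * M * (y - x)^2" unfolding RF_def by (rule R_bound[OF p2 p3])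
  have RGb: "\<And>y. y \<in> {0..1} \<Longrightarrow> \<bar>RG y\<bar> \<le> 2 * Mg * (y - x)^2" unfolding RG_def by (rule R_bound[OF q2 q3])
  have b1: "\<bar>cov n x U RG\<bar> \<le> 3 * Mg * s2 / n" unfolding U_def by (rule T_UR[OF Mg q2 q3]) (simp add: RG_def)
  have b2: "\<bar>cov n x U RF\<bar> \<le> 3 * M * s2 / n" unfolding U_def by (rule T_UR[OF M p2 p3]) (simp add: RF_def)
  have b3: "\<bar>cov n x U \<psi>\<bar> \<le> 5 * B * s2" unfolding U_def by (rule T_Upsi[OF B psi])
  have b4: "\<bar>cov n x U \<phi>\<bar> \<le> 5 * A * s2" unfolding U_def by (rule T_Upsi[OF A phi])
  have b5: "\<bar>cov n x RF RG\<bar> \<le> 9 * M * Mg * s2 / n" by (rule T_RR[OF M Mg RFb RGb])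
  have b6: "\<bar>cov n x RF \<psi>\<bar> \<le> 9 * M * B * s2 / r" by (rule T_Rpsi[OF B M psi RFb])
  have b7: "\<bar>cov n x RG \<phi>\<bar> \<le> 9 * Mg * A * s2 / r" by (rule T_Rpsi[OF A Mg phi RGb])
  have b8: "\<bar>cov n x \<phi> \<psi>\<bar> \<le> 11 * A * B * s2" by (rule T_phipsi[OF A B phi psi])
  have c1: "\<bar>p1 * cov n x U RG\<bar> \<le> M * (3 * Mg * s2 / n)" unfolding abs_mult using p1 b1 by (intro mult_mono) auto
  have c2: "\<bar>q1 * cov n x RF U\<bar> \<le> Mg * (3 * M * s2 / n)" unfolding abs_mult cov_sym[of RF] using q1 b2 by (intro mult_mono) auto
  have c3: "\<bar>p1 * cov n x U \<psi>\<bar> \<le> N1 * (5 * B * s2)" unfolding abs_mult using p1N b3 by (intro mult_mono) auto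
  have c4: "\<bar>q1 * cov n x \<phi> U\<bar> \<le> N2 * (5 * A * s2)" unfolding abs_mult cov_sym[of \<phi>] using q1N b4 by (intro mult_mono) auto
  have c7: "\<bar>cov n x \<phi> RG\<bar> \<le> 9 * Mg * A * s2 / r" using b7 cov_sym[of \<phi>] by simp
  have S: "\<bar>E (\<lambda>y. f y * g y) - E f * E g - s2 * p1 * q1\<bar>
      \<le> M * (3 * Mg * s2 / n) + Mg * (3 * M * s2 / n) + N1 * (5 * B * s2) + N2 * (5 * A * s2)
       + 9 * M * Mg * s2 / n + 9 * M * B * s2 / r + 9 * Mg * A * s2 / r + 11 * A * B * s2"
    unfolding eq UU
    apply (rule abs_leI)
    using mult.commute[of s2 "p1 * q1"] mult.assoc[of s2 p1 q1]
    using abs_le_D1[OF c1] abs_le_D1[OF c2] abs_le_D1[OF c3] abs_le_D1[OF c4] abs_le_D1[OF c7]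
       abs_le_D1[OF b5] abs_le_D1[OF b6] abs_le_D1[OF b8]
     apply linarith
    using mult.commute[of s2 "p1 * q1"] mult.assoc[of s2 p1 q1] abs_le_D2[OF c1] abs_le_D2[OF c2] abs_le_D2[OF c3] abs_le_D2[OF c4] abs_le_D2[OF c7]
       abs_le_D2[OF b5] abs_le_D2[OF b6] abs_le_D2[OF b8]
    apply linarith
    done
  have T: "M * (3 * Mg * s2 / n) + Mg * (3 * M * s2 / n) + N1 * (5 * B * s2) + N2 * (5 * A * s2)
       + 9 * M * Mg * s2 / n + 9 * M * B * s2 / r + 9 * Mg * A * s2 / r + 11 * A * B * s2
     = s2 * (11 * A * B + 5 * (N1 * B + N2 * A) + 9 * (M * B + Mg * A) / r + 15 * M * Mg / n)"
    using r_pos n_pos by (simp add: field_simps)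
  have ns2: "real n * s2 = x * (1 - x)" unfolding s2_def using n_pos by simp
  have "real n * \<bar>E (\<lambda>y. f y * g y) - E f * E g - s2 * p1 * q1\<bar> \<le> real n * (s2 * (11 * A * B + 5 * (N1 * B + N2 * A) + 9 * (M * B + Mg * A) / r + 15 * M * Mg / n))"
    using S T n_pos by (intro mult_left_mono) auto
  then show ?thesis unfolding ns2 mult.assoc[symmetric] by (simp add: s2_def)
qed

end


definition D3 :: "(real \<Rightarrow> real) \<Rightarrow> real \<Rightarrow> real \<Rightarrow> real" where
  "D3 g t y = g (y + 3*t) - 3 * g (y + 2*t) + 3 * g (y + t) - g y"

lemma om_set_bdd:
  fixes h :: "real \<Rightarrow> real"
  assumes "continuous_on {0..1} h"
  shows "bdd_above {\<bar>h (x + 3*t) - 3 * h (x + 2*t) + 3 * h (x + t) - h x\<bar> | x t.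
      0 < t \<and> t \<le> \<delta> \<and> 0 \<le> x \<and> x + 3*t \<le> 1}"
proof -
  obtain B where B: "\<And>y. y \<in> {0..1} \<Longrightarrow> norm (h y) \<le> B"
    using continuous_on_compact_bound[OF compact_Icc assms] by blast
  show ?thesis
  proof (rule bdd_aboveI, safe)
    fix x t :: real assume "0 < t" "t \<le> \<delta>" "0 \<le> x" "x + 3*t \<le> 1"
    then have "\<bar>h (x + 3*t)\<bar> \<le> B" "\<bar>h (x + 2*t)\<bar> \<le> B" "\<bar>h (x + t)\<bar> \<le> B" "\<bar>h x\<bar> \<le> B"
      using B by auto
    then show "\<bar>h (x + 3*t) - 3 * h (x + 2*t) + 3 * h (x + t) - h x\<bar> \<le> 8 * B" by linarith
  qed
qed

lemma om_le:
  assumes "continuous_on {0..1} h" "0 < t" "t \<le> \<delta>" "0 \<le> y" "y + 3*t \<le> 1"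
  shows "\<bar>D3 h t y\<bar> \<le> omega3 h \<delta>"
  unfolding omega3_def D3_def
  by (rule cSup_upper[OF _ om_set_bdd[OF assms(1)]]) (use assms in blast)

lemma om_nonneg:
  assumes "continuous_on {0..1} h" "0 < \<delta>"
  shows "0 \<le> omega3 h \<delta>"
proof -
  define t where "t = min \<delta> (1/3)"
  have "\<bar>D3 h t 0\<bar> \<le> omega3 h \<delta>" by (rule om_le[OF assms(1)]) (use assms in \<open>auto simp: t_def\<close>)
  then show ?thesis by linarith
qed

lemma om_refl:
  fixes h :: "real \<Rightarrow> real"
  shows "omega3 (\<lambda>y. h (1 - y)) \<delta> = omega3 h \<delta>"
proof -
  have "{\<bar>h (1 - (x + 3*t)) - 3 * h (1 - (x + 2*t)) + 3 * h (1 - (x + t)) - h (1 - x)\<bar> | x t.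
      0 < t \<and> t \<le> \<delta> \<and> 0 \<le> x \<and> x + 3*t \<le> 1} =
      {\<bar>h (x + 3*t) - 3 * h (x + 2*t) + 3 * h (x + t) - h x\<bar> | x t.
      0 < t \<and> t \<le> \<delta> \<and> 0 \<le> x \<and> x + 3*t \<le> 1}"
  proof (rule set_eqI, rule iffI)
    fix v assume "v \<in> {\<bar>h (1 - (x + 3*t)) - 3 * h (1 - (x + 2*t)) + 3 * h (1 - (x + t)) - h (1 - x)\<bar> | x t.
      0 < t \<and> t \<le> \<delta> \<and> 0 \<le> x \<and> x + 3*t \<le> 1}"
    then obtain x t where v: "v = \<bar>h (1 - (x + 3*t)) - 3 * h (1 - (x + 2*t)) + 3 * h (1 - (x + t)) - h (1 - x)\<bar>"
      and c: "0 < t" "t \<le> \<delta>" "0 \<le> x" "x + 3*t \<le> 1" by blast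
    define x' where "x' = 1 - x - 3*t"
    have "v = \<bar>h (x' + 3*t) - 3 * h (x' + 2*t) + 3 * h (x' + t) - h x'\<bar>"
      unfolding v x'_def by (simp add: algebra_simps abs_minus_commute)
    moreover have "0 \<le> x'" "x' + 3*t \<le> 1" using c by (auto simp: x'_def)
    ultimately show "v \<in> {\<bar>h (x + 3*t) - 3 * h (x + 2*t) + 3 * h (x + t) - h x\<bar> | x t.
      0 < t \<and> t \<le> \<delta> \<and> 0 \<le> x \<and> x + 3*t \<le> 1}" using c by blast
  next
    fix v assume "v \<in> {\<bar>h (x + 3*t) - 3 * h (x + 2*t) + 3 * h (x + t) - h x\<bar> | x t.
      0 < t \<and> t \<le> \<delta> \<and> 0 \<le> x \<and> x + 3*t \<le> 1}"
    then obtain x t where v: "v = \<bar>h (x + 3*t) - 3 * h (x + 2*t) + 3 * h (x + t) - h x\<bar>"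
      and c: "0 < t" "t \<le> \<delta>" "0 \<le> x" "x + 3*t \<le> 1" by blast
    define x' where "x' = 1 - x - 3*t"
    have "v = \<bar>h (1 - (x' + 3*t)) - 3 * h (1 - (x' + 2*t)) + 3 * h (1 - (x' + t)) - h (1 - x')\<bar>"
      unfolding v x'_def by (simp add: algebra_simps abs_minus_commute)
    moreover have "0 \<le> x'" "x' + 3*t \<le> 1" using c by (auto simp: x'_def)
    ultimately show "v \<in> {\<bar>h (1 - (x + 3*t)) - 3 * h (1 - (x + 2*t)) + 3 * h (1 - (x + t)) - h (1 - x)\<bar> | x t.
      0 < t \<and> t \<le> \<delta> \<and> 0 \<le> x \<and> x + 3*t \<le> 1}" using c by blast
  qed
  then show ?thesis unfolding omega3_def by simp
qed

definition clampx :: "real \<Rightarrow> real" where "clampx y = max 0 (min 1 y)"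

lemma clamp_cont: "continuous_on UNIV clampx"
  unfolding clampx_def by (intro continuous_intros)

lemma ext_cont:
  assumes "continuous_on {0..1} h"
  shows "continuous_on S (\<lambda>y. h (clampx y))"
  by (rule continuous_on_compose2[OF assms continuous_on_subset[OF clamp_cont]]) (auto simp: clampx_def)

lemma clamp_id: "y \<in> {0..1} \<Longrightarrow> clampx y = y" by (auto simp: clampx_def)

definition AD :: "(real \<Rightarrow> real) \<Rightarrow> real \<Rightarrow> real" where
  "AD g y = integral {-2..y} g"

lemma AD_deriv:
  assumes "continuous_on {-2..3} g" "y \<in> {-2<..<3}"
  shows "(AD g has_real_derivative g y) (at y)"
proof -
  have "(AD g has_real_derivative g y) (at y within {-2..3})"
    unfolding AD_def by (rule integral_has_real_derivative[OF assms(1)]) (use assms(2) in auto)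
  moreover have "at y within {-2..3} = at y"
    using assms(2) by (intro at_within_interior) (auto simp: interior_atLeastAtMost_real)
  ultimately show ?thesis by simp
qed

lemma AD_cont:
  assumes "continuous_on {-2..3} g"
  shows "continuous_on {-2..3} (AD g)"
proof -
  have "\<forall>y\<in>{-2..3}. continuous (at y within {-2..3}) (AD g)"
  proof
    fix y :: real assume y: "y \<in> {-2..3}"
    have "(AD g has_real_derivative g y) (at y within {-2..3})"
      unfolding AD_def by (rule integral_has_real_derivative[OF assms(1) y])
    then show "continuous (at y within {-2..3}) (AD g)" by (rule DERIV_continuous)
  qed
  then show ?thesis by (simp add: continuous_on_eq_continuous_within)
qed


lemma taylor3:
  fixes F :: "nat \<Rightarrow> real \<Rightarrow> real"
  assumes D: "\<forall>m t. m < 3 \<and> a \<le> t \<and> t \<le> b \<longrightarrow> DERIV (F m) t :> F (Suc m) t"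
    and "a \<le> c" "c \<le> b" "a \<le> z" "z \<le> b" "z \<noteq> c"
  shows "\<exists>t. (if z < c then z < t \<and> t < c else c < t \<and> t < z) \<and>
    F 0 z = F 0 c + F 1 c * (z - c) + F 2 c / 2 * (z - c)^2 + F 3 t / 6 * (z - c)^3"
proof -
  have "\<exists>t. (if z < c then z < t \<and> t < c else c < t \<and> t < z) \<and>
    F 0 z = (\<Sum>m<3. (F m c / fact m) * (z - c)^m) + (F 3 t / fact 3) * (z - c)^3"
    by (rule Taylor[of 3 F "F 0" a b c z]) (use assms in auto)
  moreover have "(\<Sum>m<3. (F m c / fact m) * (z - c)^m) = F 0 c + F 1 c * (z - c) + F 2 c / 2 * (z - c)^2"
    by (simp add: eval_nat_numeral)
  moreover have "(fact 3 :: real) = 6" by (simp add: eval_nat_numeral)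
  ultimately show ?thesis by auto
qed

lemma TD:
  fixes F :: "nat \<Rightarrow> real \<Rightarrow> real"
  assumes r: "0 < r"
    and D: "\<forall>m t. m < 3 \<and> 0 \<le> t \<and> t \<le> 3*r \<longrightarrow> DERIV (F m) t :> F (Suc m) t"
    and B: "\<And>t. 0 \<le> t \<Longrightarrow> t \<le> 3*r \<Longrightarrow> \<bar>F 3 t\<bar> \<le> B"
  shows "\<bar>F 0 (3*r) - 3 * F 0 (2*r) + 3 * F 0 r - F 0 0\<bar> \<le> 9 * r^3 * B"
proof -
  obtain t1 where t1: "0 < t1" "t1 < r" and e1: "F 0 r = F 0 0 + F 1 0 * (r - 0) + F 2 0 / 2 * (r - 0)^2 + F 3 t1 / 6 * (r - 0)^3"
    using taylor3[OF D, of 0 r] r by auto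
  obtain t2 where t2: "0 < t2" "t2 < 2*r" and e2: "F 0 (2*r) = F 0 0 + F 1 0 * (2*r - 0) + F 2 0 / 2 * (2*r - 0)^2 + F 3 t2 / 6 * (2*r - 0)^3"
    using taylor3[OF D, of 0 "2*r"] r by auto
  obtain t3 where t3: "0 < t3" "t3 < 3*r" and e3: "F 0 (3*r) = F 0 0 + F 1 0 * (3*r - 0) + F 2 0 / 2 * (3*r - 0)^2 + F 3 t3 / 6 * (3*r - 0)^3"
    using taylor3[OF D, of 0 "3*r"] r by auto
  have "F 0 (3*r) - 3 * F 0 (2*r) + 3 * F 0 r - F 0 0 = r^3 * (27 * F 3 t3 - 24 * F 3 t2 + 3 * F 3 t1) / 6"
    unfolding e1 e2 e3 by (simp add: algebra_simps power2_eq_square power3_eq_cube)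
  moreover have "\<bar>27 * F 3 t3 - 24 * F 3 t2 + 3 * F 3 t1\<bar> \<le> 54 * B"
    using B[of t1] B[of t2] B[of t3] t1 t2 t3 by linarith
  ultimately show ?thesis
  proof -
    assume eq: "F 0 (3*r) - 3 * F 0 (2*r) + 3 * F 0 r - F 0 0 = r^3 * (27 * F 3 t3 - 24 * F 3 t2 + 3 * F 3 t1) / 6"
      and bd: "\<bar>27 * F 3 t3 - 24 * F 3 t2 + 3 * F 3 t1\<bar> \<le> 54 * B"
    have "\<bar>r^3 * (27 * F 3 t3 - 24 * F 3 t2 + 3 * F 3 t1) / 6\<bar> = r^3 * \<bar>27 * F 3 t3 - 24 * F 3 t2 + 3 * F 3 t1\<bar> / 6"
      using r by (simp add: abs_mult)
    also have "\<dots> \<le> r^3 * (54 * B) / 6" using bd r by (intro divide_right_mono mult_left_mono) auto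
    finally show ?thesis unfolding eq by (simp add: mult.commute)
  qed
qed

lemma DS: "(G has_real_derivative d) (at (y + c)) \<Longrightarrow> ((\<lambda>y. G (y + c)) has_real_derivative d) (at y)"
  using DERIV_shift by blast

lemma D3_deriv:
  assumes "\<And>s. s \<in> {y, y + t, y + 2*t, y + 3*t} \<Longrightarrow> (G has_real_derivative G' s) (at s)"
  shows "((\<lambda>y. D3 G t y) has_real_derivative D3 G' t y) (at y)"
proof -
  have a: "((\<lambda>y. G (y + 3*t)) has_real_derivative G' (y + 3*t)) (at y)" by (rule DS) (rule assms, simp)
  have b: "((\<lambda>y. G (y + 2*t)) has_real_derivative G' (y + 2*t)) (at y)" by (rule DS) (rule assms, simp)
  have c: "((\<lambda>y. G (y + t)) has_real_derivative G' (y + t)) (at y)" by (rule DS) (rule assms, simp)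
  have d: "(G has_real_derivative G' y) (at y)" by (rule assms, simp)
  show ?thesis unfolding D3_def
    by (intro DERIV_diff DERIV_add DERIV_cmult a b c d)
qed


lemma lin_chain_eq:
  assumes "(G has_real_derivative d) (at (y + c*p))" "D = c * d"
  shows "((\<lambda>p. G (y + c*p)) has_real_derivative D) (at p)"
proof -
  have "((\<lambda>p. y + c*p) has_real_derivative c) (at p)" by (auto intro!: derivative_eq_intros)
  from DERIV_chain2[OF assms(1) this] show ?thesis using assms(2) by (simp add: mult.commute)
qed

locale smooth =
  fixes h :: "real \<Rightarrow> real" and \<delta> r :: real
  assumes hc: "continuous_on {0..1} h" and r0: "0 < r" and r9: "9*r \<le> 1" and r3: "3*r \<le> \<delta>"
begin

definition "he y = h (clampx y)"
definition "H1 = AD he"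
definition "H2 = AD H1"
definition "H3 = AD H2"
definition "om = omega3 h \<delta>"
definition "hsG G y = 3 * D3 G r y / r^3 - 3 * D3 G (2*r) y / (2*r)^3 + D3 G (3*r) y / (3*r)^3"

lemma he_cont: "continuous_on {-2..3} he"
  unfolding he_def by (rule ext_cont[OF hc])
lemma H1_cont: "continuous_on {-2..3} H1" unfolding H1_def by (rule AD_cont[OF he_cont])
lemma H2_cont: "continuous_on {-2..3} H2" unfolding H2_def by (rule AD_cont[OF H1_cont])

lemma dH1: "s \<in> {-2<..<3} \<Longrightarrow> (H1 has_real_derivative he s) (at s)"
  unfolding H1_def by (rule AD_deriv[OF he_cont])
lemma dH2: "s \<in> {-2<..<3} \<Longrightarrow> (H2 has_real_derivative H1 s) (at s)"
  unfolding H2_def by (rule AD_deriv[OF H1_cont])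
lemma dH3: "s \<in> {-2<..<3} \<Longrightarrow> (H3 has_real_derivative H2 s) (at s)"
  unfolding H3_def by (rule AD_deriv[OF H2_cont])

lemma he_eq: "y \<in> {0..1} \<Longrightarrow> he y = h y" unfolding he_def by (simp add: clamp_id)

lemma om_nn: "0 \<le> om"
  unfolding om_def by (rule om_nonneg[OF hc]) (use r0 r3 in auto)

lemma hsG_deriv:
  assumes G: "\<And>s. s \<in> {-2<..<3} \<Longrightarrow> (G has_real_derivative G' s) (at s)"
    and y: "-2 < y" "y + 9*r < 3"
  shows "(hsG G has_real_derivative hsG G' y) (at y)"
proof -
  have D: "((\<lambda>y. D3 G t y) has_real_derivative D3 G' t y) (at y)" if "0 < t" "t \<le> 3*r" for t
    by (rule D3_deriv) (rule G, use that y in auto)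
  have e: "hsG G = (\<lambda>y. 3 * D3 G r y / r^3 - 3 * D3 G (2*r) y / (2*r)^3 + D3 G (3*r) y / (3*r)^3)"
    unfolding hsG_def by (rule ext) simp
  show ?thesis unfolding e hsG_def
    by (intro DERIV_add DERIV_diff DERIV_cdivide DERIV_cmult D) (use r0 in auto)
qed

definition "Fs (m::nat) = hsG (if m = 0 then H3 else if m = 1 then H2 else if m = 2 then H1 else he)"

lemma Fs_deriv:
  assumes "m < 3" "0 \<le> t" "t \<le> 1 - 9*r"
  shows "DERIV (Fs m) t :> Fs (Suc m) t"
proof -
  have t: "-2 < t" "t + 9*r < 3" using assms by auto
  consider "m = 0" | "m = 1" | "m = 2" using assms(1) by linarith
  then show ?thesis
  proof cases
    case 1 then show ?thesis unfolding Fs_def using hsG_deriv[OF dH3 t] by simp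
  next
    case 2 then show ?thesis unfolding Fs_def using hsG_deriv[OF dH2 t] by simp
  next
    case 3 then show ?thesis unfolding Fs_def using hsG_deriv[OF dH1 t] by simp
  qed
qed

lemma D3_he: "0 \<le> y \<Longrightarrow> 0 \<le> t \<Longrightarrow> y + 3*t \<le> 1 \<Longrightarrow> D3 he t y = D3 h t y"
  unfolding D3_def by (simp add: he_eq)

lemma D3_om: "0 \<le> y \<Longrightarrow> 0 < t \<Longrightarrow> t \<le> 3*r \<Longrightarrow> y + 3*t \<le> 1 \<Longrightarrow> \<bar>D3 he t y\<bar> \<le> om"
  unfolding om_def using D3_he om_le[OF hc] r3 by (smt (verit))

lemma hs3_bound:
  assumes "0 \<le> t" "t \<le> 1 - 9*r"
  shows "\<bar>Fs 3 t\<bar> \<le> 4 * om / r^3"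
proof -
  have a: "\<bar>D3 he r t\<bar> \<le> om" by (rule D3_om) (use assms r0 in auto)
  have b: "\<bar>D3 he (2*r) t\<bar> \<le> om" by (rule D3_om) (use assms r0 in auto)
  have c: "\<bar>D3 he (3*r) t\<bar> \<le> om" by (rule D3_om) (use assms r0 in auto)
  have r3p: "0 < r^3" using r0 by simp
  have "Fs 3 t = (3 * D3 he r t - 3/8 * D3 he (2*r) t + 1/27 * D3 he (3*r) t) / r^3"
    unfolding Fs_def hsG_def using r0 by (simp add: field_simps power3_eq_cube)
  also have "\<bar>\<dots>\<bar> = \<bar>3 * D3 he r t - 3/8 * D3 he (2*r) t + 1/27 * D3 he (3*r) t\<bar> / r^3"
    using r3p by (simp add: abs_divide)
  also have "\<dots> \<le> 4 * om / r^3"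
    using a b c om_nn r3p by (intro divide_right_mono) (auto simp: abs_le_iff)
  finally show ?thesis .
qed


definition "K y (m::nat) p = (if m = 0 then 3*H3(y+1*p) - 3/8*H3(y+2*p) + 1/27*H3(y+3*p) - p^3/6*he y
         else if m = 1 then 3*H2(y+1*p) - 3/4*H2(y+2*p) + 1/9*H2(y+3*p) - p^2/2*he y
         else if m = 2 then 3*H1(y+1*p) - 3/2*H1(y+2*p) + 1/3*H1(y+3*p) - p*he y
         else 3*he(y+1*p) - 3*he(y+2*p) + he(y+3*p) - he y)"

lemma K_deriv:
  assumes y: "0 \<le> y" "y + 9*r \<le> 1" and m: "m < 3" and p: "0 \<le> p" "p \<le> 3*r"
  shows "DERIV (K y m) p :> K y (Suc m) p"
proof -
  have pts: "y + c*p \<in> {-2<..<3}" if "0 \<le> c" "c \<le> 3" for c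
  proof -
    have "c * p \<le> 3 * (3*r)" using that p by (intro mult_mono) auto
    moreover have "0 \<le> c * p" using that p by simp
    ultimately have "-2 < y + c*p" "y + c*p < 3" using that y p by linarith+
    then show ?thesis by simp
  qed
  note d1 = lin_chain_eq[OF dH1[OF pts]] and d2 = lin_chain_eq[OF dH2[OF pts]] and d3 = lin_chain_eq[OF dH3[OF pts]]
  consider "m = 0" | "m = 1" | "m = 2" using m by linarith
  then show ?thesis
  proof cases
    case 1
    have "((\<lambda>p. 3*H3(y+1*p) - 3/8*H3(y+2*p) + 1/27*H3(y+3*p) - p^3/6*he y) has_real_derivative
        3*(1*H2(y+1*p)) - 3/8*(2*H2(y+2*p)) + 1/27*(3*H2(y+3*p)) - (3*p^2/6)*he y) (at p)"
      by (intro DERIV_diff DERIV_add DERIV_cmult d3; (auto intro!: derivative_eq_intros)?)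
    then show ?thesis using 1 unfolding K_def by (simp add: algebra_simps)
  next
    case 2
    have "((\<lambda>p. 3*H2(y+1*p) - 3/4*H2(y+2*p) + 1/9*H2(y+3*p) - p^2/2*he y) has_real_derivative
        3*(1*H1(y+1*p)) - 3/4*(2*H1(y+2*p)) + 1/9*(3*H1(y+3*p)) - (2*p/2)*he y) (at p)"
      by (intro DERIV_diff DERIV_add DERIV_cmult d2; (auto intro!: derivative_eq_intros)?)
    then show ?thesis using 2 unfolding K_def by (simp add: algebra_simps)
  next
    case 3
    have "((\<lambda>p. 3*H1(y+1*p) - 3/2*H1(y+2*p) + 1/3*H1(y+3*p) - p*he y) has_real_derivative
        3*(1*he(y+1*p)) - 3/2*(2*he(y+2*p)) + 1/3*(3*he(y+3*p)) - 1*he y) (at p)"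
      by (intro DERIV_diff DERIV_add DERIV_cmult d1; (auto intro!: derivative_eq_intros)?)
    then show ?thesis using 3 unfolding K_def by (simp add: algebra_simps)
  qed
qed


lemma K3_bound:
  assumes y: "0 \<le> y" "y + 9*r \<le> 1" and p: "0 \<le> p" "p \<le> 3*r"
  shows "\<bar>K y 3 p\<bar> \<le> om"
proof (cases "p = 0")
  case True then show ?thesis using om_nn unfolding K_def by simp
next
  case False
  have "K y 3 p = D3 he p y" unfolding K_def D3_def by (simp add: algebra_simps)
  moreover have "\<bar>D3 he p y\<bar> \<le> om" by (rule D3_om) (use y p False in auto)
  ultimately show ?thesis by simp
qed

lemma smooth_err:
  assumes y: "0 \<le> y" "y \<le> 1 - 9*r"
  shows "\<bar>Fs 0 y - h y\<bar> \<le> 9 * om"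
proof -
  have y': "y + 9*r \<le> 1" using y by simp
  have td: "\<bar>K y 0 (3*r) - 3 * K y 0 (2*r) + 3 * K y 0 r - K y 0 0\<bar> \<le> 9 * r^3 * om"
    by (rule TD[OF r0]) (use K_deriv[OF y(1) y'] K3_bound[OF y(1) y'] in auto)
  have r3: "0 < r^3" using r0 by simp
  have eq: "K y 0 (3*r) - 3 * K y 0 (2*r) + 3 * K y 0 r - K y 0 0 = r^3 * (Fs 0 y - he y)"
    unfolding K_def Fs_def hsG_def D3_def using r0
    by (simp add: field_simps power3_eq_cube)
  have "\<bar>r^3 * (Fs 0 y - he y)\<bar> = r^3 * \<bar>Fs 0 y - he y\<bar>" using r3 by (simp add: abs_mult)
  then have "r^3 * \<bar>Fs 0 y - he y\<bar> \<le> r^3 * (9 * om)" using td unfolding eq by (simp add: mult.commute mult.left_commute)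
  then have "\<bar>Fs 0 y - he y\<bar> \<le> 9 * om" using r3 by simp
  then show ?thesis using he_eq[of y] y r0 by simp
qed

lemma FR:
  assumes x: "0 \<le> x" "x \<le> 1 - 9*r" and y: "0 \<le> y" "y \<le> 1 - 9*r"
  shows "\<bar>h y - (Fs 0 x + Fs 1 x * (y - x) + Fs 2 x / 2 * (y - x)^2)\<bar> \<le> 9 * om + 2/3 * om / r^3 * \<bar>y - x\<bar>^3"
proof (cases "y = x")
  case True
  then show ?thesis using smooth_err[OF x] by simp
next
  case False
  obtain t where t: "if y < x then y < t \<and> t < x else x < t \<and> t < y"
    and e: "Fs 0 y = Fs 0 x + Fs 1 x * (y - x) + Fs 2 x / 2 * (y - x)^2 + Fs 3 t / 6 * (y - x)^3"
    using taylor3[of 0 "1 - 9*r" Fs x y] Fs_deriv x y False by auto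
  have t01: "0 \<le> t" "t \<le> 1 - 9*r" using t x y by (auto split: if_splits)
  have "\<bar>Fs 3 t / 6 * (y - x)^3\<bar> = \<bar>Fs 3 t\<bar> / 6 * \<bar>y - x\<bar>^3" by (simp add: abs_mult power_abs)
  also have "\<dots> \<le> (4 * om / r^3) / 6 * \<bar>y - x\<bar>^3"
    using hs3_bound[OF t01] by (intro mult_right_mono divide_right_mono) auto
  also have "(4 * om / r^3) / 6 * \<bar>y - x\<bar>^3 = 2/3 * om / r^3 * \<bar>y - x\<bar>^3" by simp
  finally have a: "\<bar>Fs 3 t / 6 * (y - x)^3\<bar> \<le> 2/3 * om / r^3 * \<bar>y - x\<bar>^3" .
  have b: "\<bar>Fs 0 y - h y\<bar> \<le> 9 * om" by (rule smooth_err[OF y])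
  show ?thesis using a b e by (simp add: abs_le_iff)
qed

end


lemma QX:
  fixes q :: "real \<Rightarrow> real"
  assumes q: "\<And>y. q y = \<alpha> + \<beta> * y + \<gamma> * y^2"
    and b1: "\<bar>q (1/4)\<bar> \<le> B" and b2: "\<bar>q (1/2)\<bar> \<le> B" and b3: "\<bar>q (3/4)\<bar> \<le> B"
    and y: "0 \<le> y" "y \<le> 1"
  shows "\<bar>q y\<bar> \<le> 9 * B"
proof -
  define L1 where "L1 = 8*y*y - 10*y + 3"
  define L2 where "L2 = -16*y*y + 16*y - 3"
  define L3 where "L3 = 8*y*y - 6*y + 1"
  have id: "q y = q (1/4) * L1 + q (1/2) * L2 + q (3/4) * L3"
    unfolding q L1_def L2_def L3_def by (simp add: power2_eq_square algebra_simps)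
  have yy: "y*y \<le> y" using y by (simp add: mult_right_le_one_le)
  have s1: "0 \<le> y*y - 5/4*y + 25/64" using zero_le_power2[of "y - 5/8"] by (simp add: power2_eq_square algebra_simps)
  have s2: "0 \<le> y*y - y + 1/4" using zero_le_power2[of "y - 1/2"] by (simp add: power2_eq_square algebra_simps)
  have s3: "0 \<le> y*y - 3/4*y + 9/64" using zero_le_power2[of "y - 3/8"] by (simp add: power2_eq_square algebra_simps)
  have l1: "\<bar>L1\<bar> \<le> 3" unfolding L1_def using yy s1 y by (simp add: abs_le_iff; linarith)
  have l2: "\<bar>L2\<bar> \<le> 3" unfolding L2_def using yy s2 y by (simp add: abs_le_iff; linarith)
  have l3: "\<bar>L3\<bar> \<le> 3" unfolding L3_def using yy s3 y by (simp add: abs_le_iff; linarith)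
  have "\<bar>q (1/4) * L1\<bar> \<le> B * 3" unfolding abs_mult using b1 l1 by (intro mult_mono) auto
  moreover have "\<bar>q (1/2) * L2\<bar> \<le> B * 3" unfolding abs_mult using b2 l2 by (intro mult_mono) auto
  moreover have "\<bar>q (3/4) * L3\<bar> \<le> B * 3" unfolding abs_mult using b3 l3 by (intro mult_mono) auto
  ultimately show ?thesis unfolding id by (simp add: abs_le_iff; linarith)
qed


lemma Wh0:
  fixes h :: "real \<Rightarrow> real"
  assumes hc: "continuous_on {0..1} h" and d0: "0 < \<delta>" and d1: "\<delta> \<le> 1"
    and x: "0 \<le> x" "x \<le> 1/2"
  shows "\<exists>c0 c1 c2. \<forall>y\<in>{0..1}. \<bar>h y - (c0 + c1 * (y - x) + c2 * (y - x)^2)\<bar>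
            \<le> 40000000 * omega3 h \<delta> * (1 + \<bar>y - x\<bar>^3 / \<delta>^3)"
proof -
  define r where "r = \<delta> / 36"
  have r0: "0 < r" and r9: "9*r \<le> 1/4" and r3: "3*r \<le> \<delta>" using d0 d1 by (auto simp: r_def)
  have hc': "continuous_on {0..1} (\<lambda>y. h (1 - y))"
    by (rule continuous_on_compose2[OF hc]) (auto intro!: continuous_intros)
  interpret F: smooth h \<delta> r by unfold_locales (use hc r0 r9 r3 in auto)
  interpret B: smooth "\<lambda>y. h (1 - y)" \<delta> r by unfold_locales (use hc' r0 r9 r3 in auto)
  define \<omega> where "\<omega> = omega3 h \<delta>"
  have omF: "F.om = \<omega>" unfolding F.om_def \<omega>_def ..
  have omB: "B.om = \<omega>" unfolding B.om_def \<omega>_def by (rule om_refl)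
  have w0: "0 \<le> \<omega>" using F.om_nn omF by simp
  define P where "P = \<omega> / \<delta>^3"
  have d3: "0 < \<delta>^3" "\<delta>^3 \<le> 1" using d0 d1 by (auto simp: power_le_one)
  have P0: "\<omega> \<le> P" unfolding P_def using w0 d3 by (simp add: le_divide_eq mult_left_le)
  have cst: "2/3 * \<omega> / r^3 = 31104 * P" unfolding P_def r_def using d0 by (simp add: field_simps power3_eq_cube)
  define c0 where "c0 = F.Fs 0 x"
  define c1 where "c1 = F.Fs 1 x"
  define c2 where "c2 = F.Fs 2 x / 2"
  define b0 where "b0 = B.Fs 0 (1/2)"
  define b1 where "b1 = B.Fs 1 (1/2)"
  define b2 where "b2 = B.Fs 2 (1/2) / 2"
  define Qf where "Qf y = c0 + c1 * (y - x) + c2 * (y - x)^2" for y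
  define Qb where "Qb y = b0 + b1 * ((1 - y) - 1/2) + b2 * ((1 - y) - 1/2)^2" for y
  have fw: "\<bar>h y - Qf y\<bar> \<le> 9 * \<omega> + 31104 * P * \<bar>y - x\<bar>^3" if "0 \<le> y" "y \<le> 3/4" for y
    using F.FR[of x y] x that r9 unfolding Qf_def c0_def c1_def c2_def omF cst by auto
  have bw: "\<bar>h y - Qb y\<bar> \<le> 9 * \<omega> + 31104 * P * \<bar>(1 - y) - 1/2\<bar>^3" if "1/4 \<le> y" "y \<le> 1" for y
    using B.FR[of "1/2" "1 - y"] that r9 unfolding Qb_def b0_def b1_def b2_def omB cst by auto
  define E0 where "E0 = 9 * \<omega> + 31104 * P"
  have fwE: "\<bar>h y - Qf y\<bar> \<le> E0" if "0 \<le> y" "y \<le> 3/4" for y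
  proof -
    have "\<bar>y - x\<bar>^3 \<le> 1" using that x by (intro power_le_one) auto
    then have "31104 * P * \<bar>y - x\<bar>^3 \<le> 31104 * P" using w0 P0 by (intro mult_left_le) auto
    then show ?thesis using fw[OF that] unfolding E0_def by linarith
  qed
  have bwE: "\<bar>h y - Qb y\<bar> \<le> E0" if "1/4 \<le> y" "y \<le> 1" for y
  proof -
    have "\<bar>(1 - y) - 1/2\<bar>^3 \<le> 1" using that by (intro power_le_one) auto
    then have "31104 * P * \<bar>(1 - y) - 1/2\<bar>^3 \<le> 31104 * P" using w0 P0 by (intro mult_left_le) auto
    then show ?thesis using bw[OF that] unfolding E0_def by linarith
  qed
  define q where "q y = Qf y - Qb y" for y
  have qform: "q y = (c0 - c1 * x + c2 * x^2 - b0 - b1/2 - b2/4) + (c1 - 2 * c2 * x + b1 + b2) * y + (c2 - b2) * y^2" for y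
    unfolding q_def Qf_def Qb_def by (simp add: power2_eq_square algebra_simps)
  have qn: "\<bar>q y\<bar> \<le> 2 * E0" if "1/4 \<le> y" "y \<le> 3/4" for y
    using fwE[of y] bwE[of y] that unfolding q_def by (simp add: abs_le_iff; linarith)
  have qb: "\<bar>q y\<bar> \<le> 9 * (2 * E0)" if "0 \<le> y" "y \<le> 1" for y
    by (rule QX[OF qform qn qn qn that]) auto
  have E0b: "E0 \<le> 31113 * P" unfolding E0_def using P0 by simp
  show ?thesis
  proof (intro exI ballI)
    fix y :: real assume y: "y \<in> {0..1}"
    have a3: "\<bar>y - x\<bar>^3 / \<delta>^3 * \<omega> = P * \<bar>y - x\<bar>^3" unfolding P_def by simp
    show "\<bar>h y - (c0 + c1 * (y - x) + c2 * (y - x)^2)\<bar> \<le> 40000000 * omega3 h \<delta> * (1 + \<bar>y - x\<bar>^3 / \<delta>^3)"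
    proof (cases "y \<le> 3/4")
      case True
      have "\<bar>h y - Qf y\<bar> \<le> 9 * \<omega> + 31104 * P * \<bar>y - x\<bar>^3" using fw True y by auto
      moreover have "0 \<le> P * \<bar>y - x\<bar>^3" using P0 w0 by simp
      moreover have "40000000 * \<omega> * (1 + \<bar>y - x\<bar>^3 / \<delta>^3) = 40000000 * \<omega> + 40000000 * (\<bar>y - x\<bar>^3 / \<delta>^3 * \<omega>)"
        by (simp add: algebra_simps)
      ultimately show ?thesis unfolding Qf_def \<omega>_def[symmetric] a3 using w0 by linarith
    next
      case False
      have "\<bar>h y - Qf y\<bar> \<le> \<bar>h y - Qb y\<bar> + \<bar>q y\<bar>" unfolding q_def by linarith
      also have "\<dots> \<le> E0 + 9 * (2 * E0)" using bwE[of y] qb[of y] False y by (intro add_mono) auto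
      also have "\<dots> \<le> 19 * (31113 * P)" using E0b by linarith
      also have "\<dots> \<le> 19 * (31113 * (P * (64 * \<bar>y - x\<bar>^3)))"
      proof -
        have "1/4 \<le> \<bar>y - x\<bar>" using False x by auto
        have pp: "(1/4)^3 \<le> \<bar>y - x\<bar>^3" by (rule power_mono) (use \<open>1/4 \<le> \<bar>y - x\<bar>\<close> in auto)
        have "((1::real)/4)^3 = 1/64" by (simp add: power3_eq_cube)
        then have "1 \<le> 64 * \<bar>y - x\<bar>^3" using pp by linarith
        then have "P * 1 \<le> P * (64 * \<bar>y - x\<bar>^3)" using P0 w0 by (intro mult_left_mono) auto
        then show ?thesis by simp
      qed
      also have "\<dots> \<le> 40000000 * (P * \<bar>y - x\<bar>^3)" using P0 w0 by (simp add: mult_right_mono)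
      also have "\<dots> \<le> 40000000 * \<omega> * (1 + \<bar>y - x\<bar>^3 / \<delta>^3)"
      proof -
        have "40000000 * \<omega> * (1 + \<bar>y - x\<bar>^3 / \<delta>^3) = 40000000 * \<omega> + 40000000 * (\<bar>y - x\<bar>^3 / \<delta>^3 * \<omega>)"
          by (simp add: algebra_simps)
        then show ?thesis unfolding a3 using w0 by linarith
      qed
      finally show ?thesis unfolding Qf_def \<omega>_def .
    qed
  qed
qed


lemma Wh1:
  fixes h :: "real \<Rightarrow> real"
  assumes hc: "continuous_on {0..1} h" and d0: "0 < \<delta>" and d1: "\<delta> \<le> 1"
    and x: "0 \<le> x" "x \<le> 1"
  shows "\<exists>c0 c1 c2. \<forall>y\<in>{0..1}. \<bar>h y - (c0 + c1 * (y - x) + c2 * (y - x)^2)\<bar>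
            \<le> 40000000 * omega3 h \<delta> * (1 + \<bar>y - x\<bar>^3 / \<delta>^3)"
proof (cases "x \<le> 1/2")
  case True then show ?thesis using Wh0[OF hc d0 d1 x(1)] by simp
next
  case False
  have hc': "continuous_on {0..1} (\<lambda>y. h (1 - y))"
    by (rule continuous_on_compose2[OF hc]) (auto intro!: continuous_intros)
  obtain c0 c1 c2 where c: "\<forall>z\<in>{0..1}. \<bar>h (1 - z) - (c0 + c1 * (z - (1 - x)) + c2 * (z - (1 - x))^2)\<bar>
            \<le> 40000000 * omega3 (\<lambda>y. h (1 - y)) \<delta> * (1 + \<bar>z - (1 - x)\<bar>^3 / \<delta>^3)"
    using Wh0[OF hc' d0 d1, of "1 - x"] False x by auto
  show ?thesis
  proof (intro exI ballI)
    fix y :: real assume y: "y \<in> {0..1}"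
    have "1 - y \<in> {0..1}" using y by auto
    from c[rule_format, OF this] show "\<bar>h y - (c0 + (- c1) * (y - x) + c2 * (y - x)^2)\<bar>
            \<le> 40000000 * omega3 h \<delta> * (1 + \<bar>y - x\<bar>^3 / \<delta>^3)"
      unfolding om_refl by (simp add: algebra_simps power2_eq_square abs_minus_commute)
  qed
qed

lemma Mapprox:
  fixes h :: "real \<Rightarrow> real"
  assumes hc: "continuous_on {0..1} h" and d0: "0 < \<delta>" and d1: "\<delta> \<le> 1"
    and x: "0 \<le> x" "x \<le> 1"
  shows "\<exists>c1 c2. \<forall>y\<in>{0..1}. \<bar>h y - (h x + c1 * (y - x) + c2 * (y - x)^2)\<bar>
            \<le> 80000000 * omega3 h \<delta> * (1 + \<bar>y - x\<bar>^3 / \<delta>^3)"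
proof -
  obtain c0 c1 c2 where c: "\<forall>y\<in>{0..1}. \<bar>h y - (c0 + c1 * (y - x) + c2 * (y - x)^2)\<bar>
            \<le> 40000000 * omega3 h \<delta> * (1 + \<bar>y - x\<bar>^3 / \<delta>^3)"
    using Wh1[OF hc d0 d1 x] by blast
  have w0: "0 \<le> omega3 h \<delta>" by (rule om_nonneg[OF hc d0])
  have cx: "\<bar>h x - c0\<bar> \<le> 40000000 * omega3 h \<delta>" using c[rule_format, of x] x by simp
  show ?thesis
  proof (intro exI ballI)
    fix y :: real assume y: "y \<in> {0..1}"
    have a: "\<bar>h y - (c0 + c1 * (y - x) + c2 * (y - x)^2)\<bar> \<le> 40000000 * omega3 h \<delta> * (1 + \<bar>y - x\<bar>^3 / \<delta>^3)"
      using c y by blast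
    have "40000000 * omega3 h \<delta> \<le> 40000000 * omega3 h \<delta> * (1 + \<bar>y - x\<bar>^3 / \<delta>^3)"
      using w0 d0 by (simp add: mult_le_cancel_left1)
    then show "\<bar>h y - (h x + c1 * (y - x) + c2 * (y - x)^2)\<bar> \<le> 80000000 * omega3 h \<delta> * (1 + \<bar>y - x\<bar>^3 / \<delta>^3)"
      using a cx by (simp add: abs_le_iff; linarith)
  qed
qed


lemma markov_bounds:
  fixes z0 z1 z2 z3 Mb x :: real
  assumes b0: "\<bar>z0\<bar> \<le> Mb" and b1: "\<bar>z1\<bar> \<le> Mb" and b2: "\<bar>z2\<bar> \<le> Mb" and b3: "\<bar>z3\<bar> \<le> Mb"
    and x: "0 \<le> x" "x \<le> 1"
  shows "\<bar>(-11* z0 + 18* z1 - 9* z2 + 2* z3)/2 + 2 * (9/2*(2* z0 - 5* z1 + 4* z2 - z3)) * x + 3 * (9/2*(-z0 + 3* z1 - 3* z2 + z3)) * x^2\<bar> \<le> 250 * Mb"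
    and "\<bar>9/2*(2* z0 - 5* z1 + 4* z2 - z3) + 3 * (9/2*(-z0 + 3* z1 - 3* z2 + z3)) * x\<bar> \<le> 250 * Mb"
    and "\<bar>9/2*(-z0 + 3* z1 - 3* z2 + z3)\<bar> \<le> 250 * Mb"
proof -
  define c1 where "c1 = (-11* z0 + 18* z1 - 9* z2 + 2* z3)/2"
  define c2 where "c2 = 9/2*(2* z0 - 5* z1 + 4* z2 - z3)"
  define c3 where "c3 = 9/2*(-z0 + 3* z1 - 3* z2 + z3)"
  have B1: "\<bar>c1\<bar> \<le> 20 * Mb" unfolding c1_def using b0 b1 b2 b3 by (simp add: abs_le_iff; linarith)
  have B2: "\<bar>c2\<bar> \<le> 54 * Mb" unfolding c2_def using b0 b1 b2 b3 by (simp add: abs_le_iff; linarith)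
  have B3: "\<bar>c3\<bar> \<le> 36 * Mb" unfolding c3_def using b0 b1 b2 b3 by (simp add: abs_le_iff; linarith)
  have Mb0: "0 \<le> Mb" using b0 by simp
  have xx: "\<bar>x\<bar> \<le> 1" "\<bar>x^2\<bar> \<le> 1" using x by (auto simp: abs_le_iff power_le_one)
  have t1: "\<bar>c2 * x\<bar> \<le> 54 * Mb" unfolding abs_mult using mult_mono[OF B2 xx(1)] Mb0 by simp
  have t2: "\<bar>c3 * x\<bar> \<le> 36 * Mb" unfolding abs_mult using mult_mono[OF B3 xx(1)] Mb0 by simp
  have t3: "\<bar>c3 * x^2\<bar> \<le> 36 * Mb" unfolding abs_mult using mult_mono[OF B3 xx(2)] Mb0 by simp
  show "\<bar>9/2*(-z0 + 3* z1 - 3* z2 + z3)\<bar> \<le> 250 * Mb" using B3 Mb0 unfolding c3_def by simp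
  have "\<bar>c2 + 3 * c3 * x\<bar> \<le> 250 * Mb" using B2 t2 Mb0 by (simp add: abs_le_iff; linarith)
  then show "\<bar>9/2*(2* z0 - 5* z1 + 4* z2 - z3) + 3 * (9/2*(-z0 + 3* z1 - 3* z2 + z3)) * x\<bar> \<le> 250 * Mb"
    unfolding c2_def c3_def .
  have "\<bar>c1 + 2 * c2 * x + 3 * c3 * x^2\<bar> \<le> 250 * Mb" using B1 t1 t3 Mb0 by (simp add: abs_le_iff; linarith)
  then show "\<bar>(-11* z0 + 18* z1 - 9* z2 + 2* z3)/2 + 2 * (9/2*(2* z0 - 5* z1 + 4* z2 - z3)) * x + 3 * (9/2*(-z0 + 3* z1 - 3* z2 + z3)) * x^2\<bar> \<le> 250 * Mb"
    unfolding c1_def c2_def c3_def .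
qed

lemma markov3:
  fixes p0 p1 p2 p3 x Mb :: real
  assumes x: "0 \<le> x" "x \<le> 1"
    and P: "\<And>y. y \<in> {0..1} \<Longrightarrow> \<bar>p0 + p1 * (y - x) + p2 * (y - x)^2 + p3 * (y - x)^3\<bar> \<le> Mb"
  shows "\<bar>p1\<bar> \<le> 250 * Mb" "\<bar>p2\<bar> \<le> 250 * Mb" "\<bar>p3\<bar> \<le> 250 * Mb"
proof -
  define c0 where "c0 = p0 - p1 * x + p2 * x^2 - p3 * x^3"
  define c1 where "c1 = p1 - 2 * p2 * x + 3 * p3 * x^2"
  define c2 where "c2 = p2 - 3 * p3 * x"
  define c3 where "c3 = p3"
  have ev: "p0 + p1 * (y - x) + p2 * (y - x)^2 + p3 * (y - x)^3 = c0 + c1 * y + c2 * y^2 + c3 * y^3" for y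
    unfolding c0_def c1_def c2_def c3_def by (simp add: algebra_simps power2_eq_square power3_eq_cube)
  define z0 where "z0 = c0"
  define z1 where "z1 = c0 + c1 / 3 + c2 / 9 + c3 / 27"
  define z2 where "z2 = c0 + 2 * c1 / 3 + 4 * c2 / 9 + 8 * c3 / 27"
  define z3 where "z3 = c0 + c1 + c2 + c3"
  have "z0 = c0 + c1 * 0 + c2 * 0^2 + c3 * 0^3" unfolding z0_def by simp
  then have b0: "\<bar>z0\<bar> \<le> Mb" using P[of 0] ev[of 0] by simp
  have "z1 = c0 + c1 * (1/3) + c2 * (1/3)^2 + c3 * (1/3)^3" unfolding z1_def by (simp add: power2_eq_square power3_eq_cube)
  then have b1: "\<bar>z1\<bar> \<le> Mb" using P[of "1/3"] ev[of "1/3"] by simp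
  have "z2 = c0 + c1 * (2/3) + c2 * (2/3)^2 + c3 * (2/3)^3" unfolding z2_def by (simp add: power2_eq_square power3_eq_cube)
  then have b2: "\<bar>z2\<bar> \<le> Mb" using P[of "2/3"] ev[of "2/3"] by simp
  have "z3 = c0 + c1 * 1 + c2 * 1^2 + c3 * 1^3" unfolding z3_def by simp
  then have b3: "\<bar>z3\<bar> \<le> Mb" using P[of 1] ev[of 1] by simp
  have f3: "c3 = 9/2*(-z0 + 3*z1 - 3*z2 + z3)" unfolding z0_def z1_def z2_def z3_def
    by (simp add: algebra_simps)
  have f2: "c2 = 9/2*(2*z0 - 5*z1 + 4*z2 - z3)" unfolding z0_def z1_def z2_def z3_def
    by (simp add: algebra_simps)
  have f1: "c1 = (-11*z0 + 18*z1 - 9*z2 + 2*z3)/2" unfolding z0_def z1_def z2_def z3_def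
    by (simp add: algebra_simps)
  have e3: "p3 = c3" unfolding c3_def ..
  have e2: "p2 = c2 + 3 * c3 * x" unfolding c2_def c3_def by simp
  have e1: "p1 = c1 + 2 * c2 * x + 3 * c3 * x^2" unfolding c1_def c2_def c3_def
    by (simp add: algebra_simps power2_eq_square)
  note mb = markov_bounds[OF b0 b1 b2 b3 x]
  show "\<bar>p1\<bar> \<le> 250 * Mb" unfolding e1 f1 f2 f3 by (rule mb(1))
  show "\<bar>p2\<bar> \<le> 250 * Mb" unfolding e2 f2 f3 by (rule mb(2))
  show "\<bar>p3\<bar> \<le> 250 * Mb" unfolding e3 f3 by (rule mb(3))
qed


lemma unorm_ge:
  fixes h :: "real \<Rightarrow> real"
  assumes "continuous_on {0..1} h" "y \<in> {0..1}"
  shows "\<bar>h y\<bar> \<le> unorm h"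
proof -
  obtain B where B: "\<And>y. y \<in> {0..1} \<Longrightarrow> norm (h y) \<le> B"
    using continuous_on_compact_bound[OF compact_Icc assms(1)] by blast
  have bd: "bdd_above ((\<lambda>x. \<bar>h x\<bar>) ` {0..1})" using B by (intro bdd_aboveI[of _ B]) auto
  show ?thesis unfolding unorm_def by (rule cSup_upper[OF imageI[OF assms(2)] bd])
qed

lemma unorm_nonneg:
  fixes h :: "real \<Rightarrow> real"
  assumes "continuous_on {0..1} h"
  shows "0 \<le> unorm h"
  using unorm_ge[OF assms, of 0] by simp

lemma C1_cont:
  assumes "C1_on_unit f f'"
  shows "continuous_on {0..1} f"
proof -
  have "\<forall>y\<in>{0..1}. continuous (at y within {0..1}) f"
    using assms unfolding C1_on_unit_def by (auto intro: DERIV_continuous)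
  then show ?thesis by (simp add: continuous_on_eq_continuous_within)
qed

lemma delta_facts:
  assumes n: "1 \<le> n"
  shows "0 < real n powr (-1/6)" "real n powr (-1/6) \<le> 1" "(real n powr (-1/6))^3 = 1 / sqrt (real n)"
proof -
  have np: "0 < real n" using n by simp
  show "0 < real n powr (-1/6)" using np by simp
  have g: "1 \<le> real n powr (1/6)" using n by (intro ge_one_powr_ge_zero) auto
  have "real n powr (-1/6) = inverse (real n powr (1/6))" by (simp add: powr_minus[symmetric])
  then show "real n powr (-1/6) \<le> 1" using g by (simp add: inverse_le_1_iff)
  have "(real n powr (-1/6))^3 = real n powr (real 3 * (-1/6))" using np by (simp add: powr_power)
  also have "real 3 * (-1/6) = - (1/2 :: real)" by simp
  also have "real n powr (- (1/2)) = inverse (real n powr (1/2))" by (rule powr_minus)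
  also have "real n powr (1/2) = sqrt (real n)" using np by (intro powr_half_sqrt) auto
  also have "inverse (sqrt (real n)) = 1 / sqrt (real n)" by (rule inverse_eq_divide)
  finally show "(real n powr (-1/6))^3 = 1 / sqrt (real n)" .
qed


lemma decomp:
  assumes C1: "C1_on_unit f f'" and n: "1 \<le> n" and x: "0 \<le> x" "x \<le> 1"
  shows "\<exists>p2 p3. \<forall>y\<in>{0..1}. \<bar>f y - (f x + f' x * (y - x) + p2 * (y - x)^2 + p3 * (y - x)^3)\<bar>
           \<le> 80000000 * omega3 f' (real n powr (-1/6)) * (\<bar>y - x\<bar> + sqrt (real n) * (y - x)^4)"
proof -
  define d where "d = real n powr (-1/6)"
  have d0: "0 < d" and d1: "d \<le> 1" and d3: "d^3 = 1 / sqrt (real n)" using delta_facts[OF n] by (auto simp: d_def)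
  have hc: "continuous_on {0..1} f'" using C1 unfolding C1_on_unit_def by blast
  have fd: "\<And>z. z \<in> {0..1} \<Longrightarrow> (f has_real_derivative f' z) (at z within {0..1})"
    using C1 unfolding C1_on_unit_def by blast
  obtain c1 c2 where c: "\<forall>y\<in>{0..1}. \<bar>f' y - (f' x + c1 * (y - x) + c2 * (y - x)^2)\<bar>
            \<le> 80000000 * omega3 f' d * (1 + \<bar>y - x\<bar>^3 / d^3)"
    using Mapprox[OF hc d0 d1 x] by blast
  define K where "K = 80000000 * omega3 f' d"
  have K0: "0 \<le> K" unfolding K_def using om_nonneg[OF hc d0] by simp
  have inv: "1 / d^3 = sqrt (real n)" using d3 by simp
  define \<phi> where "\<phi> y = f y - (f x + f' x * (y - x) + c1/2 * (y - x)^2 + c2/3 * (y - x)^3)" for y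
  show ?thesis
  proof (intro exI ballI)
    fix y :: real assume y: "y \<in> {0..1}"
    define S where "S = closed_segment x y"
    have S01: "S \<subseteq> {0..1}" unfolding S_def using x y by (auto simp: closed_segment_eq_real_ivl split: if_splits)
    have Sd: "\<And>z. z \<in> S \<Longrightarrow> \<bar>z - x\<bar> \<le> \<bar>y - x\<bar>"
      unfolding S_def by (auto simp: closed_segment_eq_real_ivl split: if_splits)
    define B where "B = K * (1 + sqrt (real n) * \<bar>y - x\<bar>^3)"
    have der: "(\<phi> has_field_derivative (f' z - (f' x + c1 * (z - x) + c2 * (z - x)^2))) (at z within S)" if z: "z \<in> S" for z
    proof -
      have zin: "z \<in> {0..1}" using z S01 by auto
      have "(f has_real_derivative f' z) (at z within S)"
        by (rule DERIV_subset[OF fd[OF zin] S01])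
      then show ?thesis unfolding \<phi>_def
        by (auto intro!: derivative_eq_intros simp: power2_eq_square field_simps)
    qed
    have bnd: "norm (f' z - (f' x + c1 * (z - x) + c2 * (z - x)^2)) \<le> B" if z: "z \<in> S" for z
    proof -
      have "\<bar>f' z - (f' x + c1 * (z - x) + c2 * (z - x)^2)\<bar> \<le> K * (1 + \<bar>z - x\<bar>^3 / d^3)"
        using c z S01 unfolding K_def by auto
      also have "\<bar>z - x\<bar>^3 / d^3 = sqrt (real n) * \<bar>z - x\<bar>^3" using inv by (simp add: divide_inverse mult.commute)
      also have "K * (1 + sqrt (real n) * \<bar>z - x\<bar>^3) \<le> B" unfolding B_def using K0 Sd[OF z]
        by (intro mult_left_mono add_left_mono mult_left_mono power_mono) auto
      finally show ?thesis by simp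
    qed
    have xS: "x \<in> S" and yS: "y \<in> S" unfolding S_def by auto
    have "norm (\<phi> y - \<phi> x) \<le> B * norm (y - x)"
      by (rule field_differentiable_bound[OF convex_closed_segment[of x y, folded S_def] der bnd yS xS])
    moreover have "\<phi> x = 0" unfolding \<phi>_def by simp
    moreover have "B * \<bar>y - x\<bar> = 80000000 * omega3 f' (real n powr (-1/6)) * (\<bar>y - x\<bar> + sqrt (real n) * (y - x)^4)"
    proof -
      have e4: "\<bar>y - x\<bar> * \<bar>y - x\<bar>^3 = (y - x)^4"
        by (metis power_Suc numeral_eq_Suc pred_numeral_simps(2) power_even_abs even_numeral semiring_norm(26) semiring_norm(27))
      have "B * \<bar>y - x\<bar> = K * (\<bar>y - x\<bar> + sqrt (real n) * (\<bar>y - x\<bar> * \<bar>y - x\<bar>^3))"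
        unfolding B_def by (simp add: algebra_simps)
      then show ?thesis unfolding e4 K_def d_def by simp
    qed
    ultimately show "\<bar>f y - (f x + f' x * (y - x) + c1/2 * (y - x)^2 + c2/3 * (y - x)^3)\<bar>
           \<le> 80000000 * omega3 f' (real n powr (-1/6)) * (\<bar>y - x\<bar> + sqrt (real n) * (y - x)^4)"
      unfolding \<phi>_def by simp
  qed
qed


lemma main_bound:
  assumes Cf: "C1_on_unit f f'" and Cg: "C1_on_unit g g'" and n: "1 \<le> n" and x: "0 \<le> x" "x \<le> 1"
  defines "K \<equiv> 80000000::real"
  defines "\<Lambda> \<equiv> 250 * (1 + 2 * K)"
  defines "CC \<equiv> 11 * K^2 + 5 * K + 18 * \<Lambda> * K + 15 * \<Lambda>^2"
  defines "\<omega>f \<equiv> omega3 f' (real n powr (-1/6))" and "\<omega>g \<equiv> omega3 g' (real n powr (-1/6))"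
  shows "real n * \<bar>bernstein n (\<lambda>y. f y * g y) x - bernstein n f x * bernstein n g x - x * (1 - x) / real n * f' x * g' x\<bar>
     \<le> CC * x * (1 - x) * (\<omega>f * \<omega>g + unorm f' * \<omega>g + unorm g' * \<omega>f
         + max (unorm f / sqrt (real n)) \<omega>f * max (unorm g / sqrt (real n)) \<omega>g)"
proof -
  interpret S: setting n x using n x by unfold_locales auto
  have d: "0 < real n powr (-1/6)" using delta_facts[OF n] by simp
  have fc: "continuous_on {0..1} f'" and gc: "continuous_on {0..1} g'"
    using Cf Cg unfolding C1_on_unit_def by auto
  have fc0: "continuous_on {0..1} f" and gc0: "continuous_on {0..1} g" using C1_cont Cf Cg by auto
  have wf: "0 \<le> \<omega>f" unfolding \<omega>f_def by (rule om_nonneg[OF fc d])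
  have wg: "0 \<le> \<omega>g" unfolding \<omega>g_def by (rule om_nonneg[OF gc d])
  define Nf where "Nf = unorm f" define Ng where "Ng = unorm g"
  define N1 where "N1 = unorm f'" define N2 where "N2 = unorm g'"
  have Nf0: "0 \<le> Nf" unfolding Nf_def by (rule unorm_nonneg[OF fc0])
  have Ng0: "0 \<le> Ng" unfolding Ng_def by (rule unorm_nonneg[OF gc0])
  have N10: "0 \<le> N1" unfolding N1_def by (rule unorm_nonneg[OF fc])
  have N20: "0 \<le> N2" unfolding N2_def by (rule unorm_nonneg[OF gc])
  have K0: "0 < K" unfolding K_def by simp
  have r_eq: "S.r = sqrt (real n)" unfolding S.r_def ..
  obtain p2 p3 where pf: "\<forall>y\<in>{0..1}. \<bar>f y - (f x + f' x * (y - x) + p2 * (y - x)^2 + p3 * (y - x)^3)\<bar>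
           \<le> K * \<omega>f * (\<bar>y - x\<bar> + sqrt (real n) * (y - x)^4)"
    using decomp[OF Cf n x] unfolding K_def \<omega>f_def by blast
  obtain q2 q3 where pg: "\<forall>y\<in>{0..1}. \<bar>g y - (g x + g' x * (y - x) + q2 * (y - x)^2 + q3 * (y - x)^3)\<bar>
           \<le> K * \<omega>g * (\<bar>y - x\<bar> + sqrt (real n) * (y - x)^4)"
    using decomp[OF Cg n x] unfolding K_def \<omega>g_def by blast
  define A where "A = K * \<omega>f"
  define B where "B = K * \<omega>g"
  have A0: "0 \<le> A" unfolding A_def using K0 wf by simp
  have B0: "0 \<le> B" unfolding B_def using K0 wg by simp
  define \<phi> where "\<phi> y = f y - (f x + f' x * (y - x) + p2 * (y - x)^2 + p3 * (y - x)^3)" for y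
  define \<psi> where "\<psi> y = g y - (g x + g' x * (y - x) + q2 * (y - x)^2 + q3 * (y - x)^3)" for y
  have phi: "\<bar>\<phi> y\<bar> \<le> A * S.w y" if "y \<in> {0..1}" for y
    using pf that unfolding \<phi>_def A_def S.w_def r_eq by auto
  have psi: "\<bar>\<psi> y\<bar> \<le> B * S.w y" if "y \<in> {0..1}" for y
    using pg that unfolding \<psi>_def B_def S.w_def r_eq by auto
  have wle: "S.w y \<le> 2 * S.r" if "y \<in> {0..1}" for y
  proof -
    have u1: "\<bar>y - x\<bar> \<le> 1" using S.absu[OF that] .
    have "(y - x)^4 = \<bar>y - x\<bar>^4" by (rule S.u4_abs)
    also have "\<dots> \<le> 1" using u1 by (intro power_le_one) auto
    finally have "S.r * (y - x)^4 \<le> S.r * 1" using S.r_pos by (intro mult_left_mono) auto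
    then show ?thesis unfolding S.w_def using u1 S.r_ge1 by linarith
  qed
  define Mbf where "Mbf = Nf + 2 * A * S.r"
  define Mbg where "Mbg = Ng + 2 * B * S.r"
  have Pf: "\<bar>f x + f' x * (y - x) + p2 * (y - x)^2 + p3 * (y - x)^3\<bar> \<le> Mbf" if "y \<in> {0..1}" for y
  proof -
    have "\<bar>f y\<bar> \<le> Nf" unfolding Nf_def by (rule unorm_ge[OF fc0 that])
    moreover have "A * S.w y \<le> A * (2 * S.r)" using wle[OF that] A0 by (intro mult_left_mono) auto
    ultimately show ?thesis using phi[OF that] unfolding \<phi>_def Mbf_def by (simp add: abs_le_iff; linarith)
  qed
  have Pg: "\<bar>g x + g' x * (y - x) + q2 * (y - x)^2 + q3 * (y - x)^3\<bar> \<le> Mbg" if "y \<in> {0..1}" for y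
  proof -
    have "\<bar>g y\<bar> \<le> Ng" unfolding Ng_def by (rule unorm_ge[OF gc0 that])
    moreover have "B * S.w y \<le> B * (2 * S.r)" using wle[OF that] B0 by (intro mult_left_mono) auto
    ultimately show ?thesis using psi[OF that] unfolding \<psi>_def Mbg_def by (simp add: abs_le_iff; linarith)
  qed
  note mkf = markov3[OF x Pf] and mkg = markov3[OF x Pg]
  define M where "M = 250 * Mbf"
  define Mg where "Mg = 250 * Mbg"
  have M0: "0 \<le> M" unfolding M_def Mbf_def using Nf0 A0 S.r_pos by simp
  have Mg0: "0 \<le> Mg" unfolding Mg_def Mbg_def using Ng0 B0 S.r_pos by simp
  have p1N: "\<bar>f' x\<bar> \<le> N1" unfolding N1_def by (rule unorm_ge[OF fc]) (use x in auto)
  have q1N: "\<bar>g' x\<bar> \<le> N2" unfolding N2_def by (rule unorm_ge[OF gc]) (use x in auto)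
  have core: "real n * \<bar>S.E (\<lambda>y. f y * g y) - S.E f * S.E g - x * (1 - x) / n * f' x * g' x\<bar>
     \<le> x * (1 - x) * (11 * A * B + 5 * (N1 * B + N2 * A) + 9 * (M * B + Mg * A) / S.r + 15 * M * Mg / n)"
    by (rule S.core[OF A0 B0 M0 Mg0 p1N _ _ _ q1N, of p2 p3 q2 q3 \<phi> \<psi>])
       (use mkf mkg phi psi in \<open>auto simp: M_def Mg_def \<phi>_def \<psi>_def\<close>)
  define mf where "mf = max (Nf / sqrt (real n)) \<omega>f"
  define mg where "mg = max (Ng / sqrt (real n)) \<omega>g"
  have mf0: "0 \<le> mf" "\<omega>f \<le> mf" "Nf / S.r \<le> mf" unfolding mf_def r_eq using wf by auto
  have mg0: "0 \<le> mg" "\<omega>g \<le> mg" "Ng / S.r \<le> mg" unfolding mg_def r_eq using wg by auto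
  have Mr: "M / S.r \<le> \<Lambda> * mf"
  proof -
    have "M / S.r = 250 * (Nf / S.r + 2 * K * \<omega>f)" unfolding M_def Mbf_def A_def using S.r_pos by (simp add: field_simps)
    also have "\<dots> \<le> 250 * (mf + 2 * K * mf)" using mf0 K0 by (intro mult_left_mono add_mono) auto
    also have "\<dots> = \<Lambda> * mf" unfolding \<Lambda>_def by (simp add: algebra_simps)
    finally show ?thesis .
  qed
  have Mgr: "Mg / S.r \<le> \<Lambda> * mg"
  proof -
    have "Mg / S.r = 250 * (Ng / S.r + 2 * K * \<omega>g)" unfolding Mg_def Mbg_def B_def using S.r_pos by (simp add: field_simps)
    also have "\<dots> \<le> 250 * (mg + 2 * K * mg)" using mg0 K0 by (intro mult_left_mono add_mono) auto
    also have "\<dots> = \<Lambda> * mg" unfolding \<Lambda>_def by (simp add: algebra_simps)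
    finally show ?thesis .
  qed
  have L0: "0 \<le> \<Lambda>" unfolding \<Lambda>_def K_def by simp
  have Mr0: "0 \<le> M / S.r" using M0 S.r_pos by simp
  have Mgr0: "0 \<le> Mg / S.r" using Mg0 S.r_pos by simp
  have t1: "11 * A * B = 11 * K^2 * (\<omega>f * \<omega>g)" unfolding A_def B_def by (simp add: power2_eq_square algebra_simps)
  have t2: "5 * (N1 * B + N2 * A) = 5 * K * (N1 * \<omega>g + N2 * \<omega>f)" unfolding A_def B_def by (simp add: algebra_simps)
  have t3: "9 * (M * B + Mg * A) / S.r = 9 * K * ((M / S.r) * \<omega>g + (Mg / S.r) * \<omega>f)"
    unfolding A_def B_def using S.r_pos by (simp add: field_simps)
  have t3b: "(M / S.r) * \<omega>g + (Mg / S.r) * \<omega>f \<le> 2 * \<Lambda> * (mf * mg)"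
  proof -
    have "(M / S.r) * \<omega>g \<le> (\<Lambda> * mf) * mg" using Mr mg0 Mr0 wg by (intro mult_mono) auto
    moreover have "(Mg / S.r) * \<omega>f \<le> (\<Lambda> * mg) * mf" using Mgr mf0 Mgr0 wf by (intro mult_mono) auto
    ultimately show ?thesis by (simp add: algebra_simps)
  qed
  have t4: "15 * M * Mg / real n = 15 * ((M / S.r) * (Mg / S.r))" using S.r_sq S.r_pos by (simp add: field_simps)
  have t4b: "(M / S.r) * (Mg / S.r) \<le> (\<Lambda> * mf) * (\<Lambda> * mg)" using Mr Mgr Mr0 Mgr0 by (intro mult_mono) (auto intro: order_trans)
  define SS where "SS = \<omega>f * \<omega>g + N1 * \<omega>g + N2 * \<omega>f + mf * mg"
  have wfg: "0 \<le> \<omega>f * \<omega>g" "0 \<le> N1 * \<omega>g" "0 \<le> N2 * \<omega>f" "0 \<le> mf * mg" using wf wg N10 N20 mf0 mg0 by auto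
  have T: "11 * A * B + 5 * (N1 * B + N2 * A) + 9 * (M * B + Mg * A) / S.r + 15 * M * Mg / n \<le> CC * SS"
  proof -
    have a: "9 * K * ((M / S.r) * \<omega>g + (Mg / S.r) * \<omega>f) \<le> 9 * K * (2 * \<Lambda> * (mf * mg))"
      using t3b K0 by (intro mult_left_mono) auto
    have b: "15 * ((M / S.r) * (Mg / S.r)) \<le> 15 * (\<Lambda>^2 * (mf * mg))"
    proof -
      have "(\<Lambda> * mf) * (\<Lambda> * mg) = \<Lambda>^2 * (mf * mg)" by (simp add: power2_eq_square algebra_simps)
      then show ?thesis using t4b by linarith
    qed
    have c: "CC * SS = 11 * K^2 * (\<omega>f * \<omega>g) + 5 * K * (\<omega>f * \<omega>g) + 18 * \<Lambda> * K * (\<omega>f * \<omega>g) + 15 * \<Lambda>^2 * (\<omega>f * \<omega>g)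
        + (11 * K^2 + 5 * K + 18 * \<Lambda> * K + 15 * \<Lambda>^2) * (N1 * \<omega>g + N2 * \<omega>f)
        + (11 * K^2 + 5 * K + 18 * \<Lambda> * K + 15 * \<Lambda>^2) * (mf * mg)"
      unfolding CC_def SS_def by (simp add: algebra_simps)
    have pos: "0 \<le> K^2 * (\<omega>f * \<omega>g)" "0 \<le> K * (\<omega>f * \<omega>g)" "0 \<le> \<Lambda> * K * (\<omega>f * \<omega>g)" "0 \<le> \<Lambda>^2 * (\<omega>f * \<omega>g)"
      "0 \<le> K^2 * (N1 * \<omega>g + N2 * \<omega>f)" "0 \<le> \<Lambda> * K * (N1 * \<omega>g + N2 * \<omega>f)" "0 \<le> \<Lambda>^2 * (N1 * \<omega>g + N2 * \<omega>f)"
      "0 \<le> K^2 * (mf * mg)" "0 \<le> K * (mf * mg)"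
      using wfg K0 L0 by auto
    have e1: "(11 * K^2 + 5 * K + 18 * \<Lambda> * K + 15 * \<Lambda>^2) * (N1 * \<omega>g + N2 * \<omega>f)
       = 11 * (K^2 * (N1 * \<omega>g + N2 * \<omega>f)) + 5 * K * (N1 * \<omega>g + N2 * \<omega>f) + 18 * (\<Lambda> * K * (N1 * \<omega>g + N2 * \<omega>f)) + 15 * (\<Lambda>^2 * (N1 * \<omega>g + N2 * \<omega>f))"
      by (simp add: algebra_simps)
    have e2: "(11 * K^2 + 5 * K + 18 * \<Lambda> * K + 15 * \<Lambda>^2) * (mf * mg)
       = 11 * (K^2 * (mf * mg)) + 5 * (K * (mf * mg)) + 9 * K * (2 * \<Lambda> * (mf * mg)) + 15 * (\<Lambda>^2 * (mf * mg))"
      by (simp add: algebra_simps)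
    show ?thesis unfolding t1 t2 t3 t4 c e1 e2 using a b pos by linarith
  qed
  have xx: "0 \<le> x * (1 - x)" using x by simp
  have "real n * \<bar>S.E (\<lambda>y. f y * g y) - S.E f * S.E g - x * (1 - x) / n * f' x * g' x\<bar> \<le> x * (1 - x) * (CC * SS)"
    using core mult_left_mono[OF T xx] by linarith
  then show ?thesis
    unfolding bernstein_Ex SS_def mf_def mg_def Nf_def Ng_def N1_def N2_def by (simp add: algebra_simps)
qed


theorem theorem2p4:
  shows "\<exists>C>0. \<forall>f f' g g' :: real \<Rightarrow> real. \<forall>n::nat. \<forall>x::real.
    C1_on_unit f f' \<and> C1_on_unit g g' \<and> n \<ge> 1 \<and> x \<in> {0..1} \<longrightarrow>
    (let d = real n powr (-1/6) in
     real n * \<bar>bernstein n (\<lambda>y. f y * g y) x - bernstein n f x * bernstein n g x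
                 - x * (1 - x) / real n * f' x * g' x\<bar>
     \<le> C * x * (1 - x) *
        (omega3 f' d * omega3 g' d
         + unorm f' * omega3 g' d + unorm g' * omega3 f' d
         + max (unorm f / sqrt (real n)) (omega3 f' d)
           * max (unorm g / sqrt (real n)) (omega3 g' d)))"
proof (intro exI[of _ "11 * (80000000::real)^2 + 5 * 80000000 + 18 * (250 * (1 + 2 * 80000000)) * 80000000 + 15 * (250 * (1 + 2 * 80000000))^2"] conjI allI impI)
  show "0 < 11 * (80000000::real)^2 + 5 * 80000000 + 18 * (250 * (1 + 2 * 80000000)) * 80000000 + 15 * (250 * (1 + 2 * 80000000))^2"
    by simp
next
  fix f f' g g' :: "real \<Rightarrow> real" and n :: nat and x :: real
  assume H: "C1_on_unit f f' \<and> C1_on_unit g g' \<and> n \<ge> 1 \<and> x \<in> {0..1}"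
  then have Cf: "C1_on_unit f f'" and Cg: "C1_on_unit g g'" and n: "1 \<le> n" and x: "0 \<le> x" "x \<le> 1" by auto
  show "let d = real n powr (-1/6) in
     real n * \<bar>bernstein n (\<lambda>y. f y * g y) x - bernstein n f x * bernstein n g x
                 - x * (1 - x) / real n * f' x * g' x\<bar>
     \<le> (11 * (80000000::real)^2 + 5 * 80000000 + 18 * (250 * (1 + 2 * 80000000)) * 80000000 + 15 * (250 * (1 + 2 * 80000000))^2) * x * (1 - x) *
        (omega3 f' d * omega3 g' d
         + unorm f' * omega3 g' d + unorm g' * omega3 f' d
         + max (unorm f / sqrt (real n)) (omega3 f' d)
           * max (unorm g / sqrt (real n)) (omega3 g' d))"
    unfolding Let_def by (rule main_bound[OF Cf Cg n x])
qed

end
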